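(* Let $r\in\mathbb N$, $n=mr$, and $\mathbf x=(\mathbf x_1,\dots,\mathbf x_r)\sim\gamma_m^{\otimes r}$ (so $\mathbf x\in\mathcal X^n$), using weighted least squares with weight $w_m$. Let $0<\delta<1$, $S_\delta=\{\lambda_{\min}(\mathbf G^{w_m}(\mathbf x))\ge1-\delta\}$, and assume $\mathbb P(S_\delta)>0$. Then for every $f\in L^2_\mu$, with $\hat f_m=\hat P_{V_m}f$, $$\mathbb E(\|f-\hat f_m\|^2\mid S_\delta)\le\big(1+\mathbb P(S_\delta)^{-1}(1-\delta)^{-1}\big)\inf_{g\in V_m}\|f-g\|^2,$$ $$\mathbb E(\|f-\hat f_m\|^2\mid S_\delta)\le\big(1+\mathbb P(S_\delta)^{-1}(1-\delta)^{-2}r^{-1}\big)\inf_{g\in V_m}\|f-g\|^2.$$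
   Context: $\mathcal X$ is a Polish space with Borel probability measure $\mu$; $\|\cdot\|$ is the $L^2_\mu$ norm. $V_m\subset L^2_\mu$ has $L^2_\mu$-orthonormal basis $\varphi_1,\dots,\varphi_m$, $\boldsymbol\varphi=(\varphi_1,\dots,\varphi_m)^T$, $w_m(x)=\frac1m\|\boldsymbol\varphi(x)\|_2^2$. For points $x_1,\dots,x_n$ and weight $w$: $\|f\|_n^2=\frac1n\sum_iw(x_i)^{-1}f(x_i)^2$, $\mathbf G^w=\frac1n\sum_iw(x_i)^{-1}\boldsymbol\varphi(x_i)\boldsymbol\varphi(x_i)^T$, $\hat P_{V_m}f$ is the unique minimizer over $V_m$ of $\|f-g\|_n$. For $\mathbf x=(x_1,\dots,x_m)$, $\Phi(\mathbf x)$ has rows $\boldsymbol\varphi(x_i)^T$, and $\gamma_m$ is the probability measure on $\mathcal X^m$ with $d\gamma_m(\mathbf x)=\frac1{m!}\det(\Phi(\mathbf x)^T\Phi(\mathbf x))\,d\mu^{\otimes m}(\mathbf x)$ (projection determinantal point process). *)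

theory Defs
  imports "HOL-Probability.Probability" "Jordan_Normal_Form.Char_Poly"
begin

definition wm :: "nat \<Rightarrow> (nat \<Rightarrow> 'a \<Rightarrow> real) \<Rightarrow> 'a \<Rightarrow> real" where
  "wm m \<phi> x = (1 / real m) * (\<Sum>k<m. (\<phi> k x)\<^sup>2)"

definition Vspace :: "nat \<Rightarrow> (nat \<Rightarrow> 'a \<Rightarrow> real) \<Rightarrow> ('a \<Rightarrow> real) set" where
  "Vspace m \<phi> = {g. \<exists>c :: nat \<Rightarrow> real. g = (\<lambda>x. \<Sum>k<m. c k * \<phi> k x)}"

definition PhiMat :: "nat \<Rightarrow> (nat \<Rightarrow> 'a \<Rightarrow> real) \<Rightarrow> (nat \<Rightarrow> 'a) \<Rightarrow> real mat" where
  "PhiMat m \<phi> x = mat m m (\<lambda>(i, k). \<phi> k (x i))"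

definition gammaDPP :: "'a measure \<Rightarrow> nat \<Rightarrow> (nat \<Rightarrow> 'a \<Rightarrow> real) \<Rightarrow> (nat \<Rightarrow> 'a) measure" where
  "gammaDPP M m \<phi> = density (PiM {..<m} (\<lambda>_. M))
     (\<lambda>x. ennreal (Determinant.det (transpose_mat (PhiMat m \<phi> x) * PhiMat m \<phi> x) / fact m))"

text \<open>Sample x = (x_1,...,x_r), x_j in X^m, n = m r points x j i (j<r, i<m).
  Empirical seminorm squared with weight w (inverse of 0 taken as 0, a null event).\<close>
definition emp_norm :: "nat \<Rightarrow> nat \<Rightarrow> ('a \<Rightarrow> real) \<Rightarrow> (nat \<Rightarrow> nat \<Rightarrow> 'a) \<Rightarrow> ('a \<Rightarrow> real) \<Rightarrow> real" where
  "emp_norm m r w x f = sqrt ((1 / real (m * r)) * (\<Sum>j<r. \<Sum>i<m. inverse (w (x j i)) * (f (x j i))\<^sup>2))"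

definition gram :: "nat \<Rightarrow> nat \<Rightarrow> (nat \<Rightarrow> 'a \<Rightarrow> real) \<Rightarrow> ('a \<Rightarrow> real) \<Rightarrow> (nat \<Rightarrow> nat \<Rightarrow> 'a) \<Rightarrow> real mat" where
  "gram m r \<phi> w x = mat m m (\<lambda>(k, l).
     (1 / real (m * r)) * (\<Sum>j<r. \<Sum>i<m. inverse (w (x j i)) * \<phi> k (x j i) * \<phi> l (x j i)))"

definition lambda_min :: "real mat \<Rightarrow> real" where
  "lambda_min A = Min {k. eigenvalue A k}"

definition wls_proj :: "nat \<Rightarrow> nat \<Rightarrow> (nat \<Rightarrow> 'a \<Rightarrow> real) \<Rightarrow> ('a \<Rightarrow> real) \<Rightarrow> (nat \<Rightarrow> nat \<Rightarrow> 'a) \<Rightarrow> ('a \<Rightarrow> real) \<Rightarrow> ('a \<Rightarrow> real)" where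
  "wls_proj m r \<phi> w x f = (THE g. g \<in> Vspace m \<phi> \<and>
     (\<forall>h \<in> Vspace m \<phi>. emp_norm m r w x (\<lambda>y. f y - g y) \<le> emp_norm m r w x (\<lambda>y. f y - h y)))"

end

theory Submission
  imports Defs
begin


lemma perm_agree_one:
  assumes s: "\<sigma> permutes A" and t: "\<tau> permutes A" and p: "p \<in> A"
    and ag: "\<And>i. i \<in> A \<Longrightarrow> i \<noteq> p \<Longrightarrow> \<sigma> i = \<tau> i"
  shows "\<sigma> = \<tau>"
proof -
  have "\<tau> p \<in> A" using t p by (simp add: permutes_in_image)
  then obtain i where i: "i \<in> A" "\<tau> p = \<sigma> i"
    using permutes_image[OF s] by (metis imageE)
  have "i = p"
  proof (rule ccontr)
    assume "i \<noteq> p"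
    then have "\<tau> p = \<tau> i" using ag i by auto
    then show False using \<open>i \<noteq> p\<close> permutes_inj[OF t] by (metis injD)
  qed
  then have tp: "\<tau> p = \<sigma> p" using i by simp
  show ?thesis
  proof
    fix x show "\<sigma> x = \<tau> x"
      using ag tp permutes_not_in[OF s] permutes_not_in[OF t] by (cases "x \<in> A"; cases "x = p") auto
  qed
qed

lemma perm_agree_two:
  assumes s: "\<sigma> permutes A" and t: "\<tau> permutes A" and p: "p \<in> A" and q: "q \<in> A" and pq: "p \<noteq> q"
    and ag: "\<And>i. i \<in> A \<Longrightarrow> i \<noteq> p \<Longrightarrow> i \<noteq> q \<Longrightarrow> \<sigma> i = \<tau> i"
  shows "\<tau> = \<sigma> \<or> \<tau> = \<sigma> \<circ> Transposition.transpose p q"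
proof -
  have inj: "\<tau> a = \<tau> b \<Longrightarrow> a = b" for a b using permutes_inj[OF t] by (metis injD)
  have injs: "\<sigma> a = \<sigma> b \<Longrightarrow> a = b" for a b using permutes_inj[OF s] by (metis injD)
  have im: "\<tau> y \<in> {\<sigma> p, \<sigma> q}" if y: "y \<in> {p, q}" for y
  proof -
    have "\<tau> y \<in> A" using t y p q by (auto simp add: permutes_in_image)
    then obtain i where i: "i \<in> A" "\<tau> y = \<sigma> i"
      using permutes_image[OF s] by (metis imageE)
    have "i = p \<or> i = q"
    proof (rule ccontr)
      assume "\<not> (i = p \<or> i = q)"
      then have "\<tau> y = \<tau> i" using ag i by auto
      then show False using \<open>\<not> (i = p \<or> i = q)\<close> y inj by blast
    qed
    then show ?thesis using i by auto
  qed
  have out: "\<sigma> x = \<tau> x" if "x \<noteq> p" "x \<noteq> q" for x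
    using ag that permutes_not_in[OF s] permutes_not_in[OF t] by (cases "x \<in> A") auto
  show ?thesis
  proof (cases "\<tau> p = \<sigma> p")
    case True
    then have "\<tau> q = \<sigma> q" using im[of q] inj pq by auto
    then have "\<tau> = \<sigma>" using True out by (intro ext) metis
    then show ?thesis by simp
  next
    case False
    then have 1: "\<tau> p = \<sigma> q" using im[of p] by auto
    then have "\<tau> q = \<sigma> p" using im[of q] inj pq by auto
    then have "\<tau> = \<sigma> \<circ> Transposition.transpose p q" using 1 out
      by (intro ext) (auto simp: Transposition.transpose_def)
    then show ?thesis by simp
  qed
qed

locale dpp_set =
  fixes M :: "'a measure" and \<phi> :: "nat \<Rightarrow> 'a \<Rightarrow> real" and m :: nat
  assumes prob: "prob_space M" and mpos: "m \<ge> 1"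
    and \<phi>meas: "\<And>k. k < m \<Longrightarrow> \<phi> k \<in> borel_measurable M"
    and \<phi>sq: "\<And>k. k < m \<Longrightarrow> integrable M (\<lambda>x. (\<phi> k x)\<^sup>2)"
    and orth: "\<And>k l. k < m \<Longrightarrow> l < m \<Longrightarrow>
                  (\<integral>x. \<phi> k x * \<phi> l x \<partial>M) = (if k = l then 1 else 0)"
begin

abbreviation PM where "PM \<equiv> PiM {..<m} (\<lambda>_. M)"

definition dphi :: "(nat \<Rightarrow> 'a) \<Rightarrow> real" where
  "dphi x = (\<Sum>\<sigma> | \<sigma> permutes {..<m}. real_of_int (sign \<sigma>) * (\<Prod>i<m. \<phi> (\<sigma> i) (x i)))"

lemma PhiMat_carrier: "PhiMat m \<phi> x \<in> carrier_mat m m"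
  by (simp add: PhiMat_def)

lemma det_PhiMat: "Determinant.det (PhiMat m \<phi> x) = dphi x"
proof -
  have "Determinant.det (PhiMat m \<phi> x) = (\<Sum>p | p permutes {0..<m}.
        of_int (sign p) * (\<Prod>i = 0..<m. PhiMat m \<phi> x $$ (i, p i)))"
    by (simp add: det_def PhiMat_def)
  also have "\<dots> = dphi x" unfolding dphi_def lessThan_atLeast0[symmetric]
  proof (intro sum.cong refl arg_cong2[where f="(*)"] prod.cong)
    fix p i assume "p \<in> {p. p permutes {..<m}}" "i \<in> {..<m}"
    then have "p i < m" "i < m" using permutes_in_image[of p "{..<m}" i] by auto
    then show "PhiMat m \<phi> x $$ (i, p i) = \<phi> (p i) (x i)" by (simp add: PhiMat_def)
  qed
  finally show ?thesis .
qed

lemma det_gramPhi: "Determinant.det (transpose_mat (PhiMat m \<phi> x) * PhiMat m \<phi> x) = (dphi x)\<^sup>2"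
  using PhiMat_carrier[of x]
  by (simp add: det_mult[of _ m] det_transpose det_PhiMat power2_eq_square)

lemma leibniz_ident: "(\<Prod>i<m. h i (x i)) * (dphi x)\<^sup>2 =
   (\<Sum>\<sigma> | \<sigma> permutes {..<m}. \<Sum>\<tau> | \<tau> permutes {..<m}. real_of_int (sign \<sigma> * sign \<tau>) *
        (\<Prod>i<m. h i (x i) * \<phi> (\<sigma> i) (x i) * \<phi> (\<tau> i) (x i)))"
proof -
  have "(\<Prod>i<m. h i (x i)) * (dphi x)\<^sup>2 = (\<Sum>\<sigma> | \<sigma> permutes {..<m}. \<Sum>\<tau> | \<tau> permutes {..<m}.
     (\<Prod>i<m. h i (x i)) * ((real_of_int (sign \<sigma>) * (\<Prod>i<m. \<phi> (\<sigma> i) (x i))) *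
       (real_of_int (sign \<tau>) * (\<Prod>i<m. \<phi> (\<tau> i) (x i)))))"
    unfolding power2_eq_square dphi_def sum_product[symmetric] sum_distrib_left[symmetric] by (simp only: sum_distrib_right)
  show ?thesis
    unfolding \<open>(\<Prod>i<m. h i (x i)) * (dphi x)\<^sup>2 = _\<close>
    by (intro sum.cong refl) (simp add: prod.distrib mult_ac)
qed

lemma psf: "product_sigma_finite (\<lambda>_::nat. M)"
  unfolding product_sigma_finite_def
  using prob prob_space_imp_sigma_finite by blast

lemma leibniz_integral:
  assumes hi: "\<And>i a c. i < m \<Longrightarrow> a < m \<Longrightarrow> c < m \<Longrightarrow> integrable M (\<lambda>y. h i y * \<phi> a y * \<phi> c y)"
  shows "integrable PM (\<lambda>x. (\<Prod>i<m. h i (x i)) * (dphi x)\<^sup>2)"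
    and "(\<integral>x. (\<Prod>i<m. h i (x i)) * (dphi x)\<^sup>2 \<partial>PM) =
      (\<Sum>\<sigma> | \<sigma> permutes {..<m}. \<Sum>\<tau> | \<tau> permutes {..<m}. real_of_int (sign \<sigma> * sign \<tau>) *
        (\<Prod>i<m. \<integral>y. h i y * \<phi> (\<sigma> i) y * \<phi> (\<tau> i) y \<partial>M))"
proof -
  have ti: "integrable PM (\<lambda>x. \<Prod>i<m. h i (x i) * \<phi> (\<sigma> i) (x i) * \<phi> (\<tau> i) (x i))"
    and tv: "(\<integral>x. (\<Prod>i<m. h i (x i) * \<phi> (\<sigma> i) (x i) * \<phi> (\<tau> i) (x i)) \<partial>PM)
        = (\<Prod>i<m. \<integral>y. h i y * \<phi> (\<sigma> i) y * \<phi> (\<tau> i) y \<partial>M)"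
    if "\<sigma> permutes {..<m}" "\<tau> permutes {..<m}" for \<sigma> \<tau>
  proof -
    have "integrable M (\<lambda>y. h i y * \<phi> (\<sigma> i) y * \<phi> (\<tau> i) y)" if "i \<in> {..<m}" for i
    proof -
      have "\<sigma> i < m" "\<tau> i < m" "i < m" using that \<open>\<sigma> permutes _\<close> \<open>\<tau> permutes _\<close>
        permutes_in_image[of \<sigma> "{..<m}" i] permutes_in_image[of \<tau> "{..<m}" i] by auto
      then show ?thesis using hi by blast
    qed
    then show "integrable PM (\<lambda>x. \<Prod>i<m. h i (x i) * \<phi> (\<sigma> i) (x i) * \<phi> (\<tau> i) (x i))"
      and "(\<integral>x. (\<Prod>i<m. h i (x i) * \<phi> (\<sigma> i) (x i) * \<phi> (\<tau> i) (x i)) \<partial>PM)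
        = (\<Prod>i<m. \<integral>y. h i y * \<phi> (\<sigma> i) y * \<phi> (\<tau> i) y \<partial>M)"
      using product_sigma_finite.product_integrable_prod[OF psf, of "{..<m}"
          "\<lambda>i y. h i y * \<phi> (\<sigma> i) y * \<phi> (\<tau> i) y"]
        product_sigma_finite.product_integral_prod[OF psf, of "{..<m}"
          "\<lambda>i y. h i y * \<phi> (\<sigma> i) y * \<phi> (\<tau> i) y"]
      by auto
  qed
  show "integrable PM (\<lambda>x. (\<Prod>i<m. h i (x i)) * (dphi x)\<^sup>2)"
    unfolding leibniz_ident
    by (intro Bochner_Integration.integrable_sum integrable_mult_right ti) auto
  show "(\<integral>x. (\<Prod>i<m. h i (x i)) * (dphi x)\<^sup>2 \<partial>PM) =
      (\<Sum>\<sigma> | \<sigma> permutes {..<m}. \<Sum>\<tau> | \<tau> permutes {..<m}. real_of_int (sign \<sigma> * sign \<tau>) *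
        (\<Prod>i<m. \<integral>y. h i y * \<phi> (\<sigma> i) y * \<phi> (\<tau> i) y \<partial>M))"
    unfolding leibniz_ident
    by (subst Bochner_Integration.integral_sum, (intro Bochner_Integration.integrable_sum integrable_mult_right ti; auto))
       (intro sum.cong refl; subst Bochner_Integration.integral_sum;
        auto intro!: integrable_mult_right ti sum.cong simp: tv)
qed

end


lemma prod_indicator_real:
  assumes "finite A"
  shows "(\<Prod>i\<in>A. if P i then 1 else (0::real)) = (if \<forall>i\<in>A. P i then 1 else 0)"
  using assms by (induction A rule: finite_induct) auto

lemma abs_mult_le_sq: "\<bar>a * b\<bar> \<le> a\<^sup>2 + (b::real)\<^sup>2"
proof -
  have "0 \<le> (\<bar>a\<bar> - \<bar>b\<bar>)\<^sup>2" by simp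
  then have "2 * \<bar>a\<bar> * \<bar>b\<bar> \<le> a\<^sup>2 + b\<^sup>2" by (simp add: power2_eq_square algebra_simps)
  moreover have "0 \<le> \<bar>a\<bar> * \<bar>b\<bar>" by simp
  ultimately show ?thesis unfolding abs_mult by linarith
qed

lemma perm_lt: "\<sigma> permutes {..<n} \<Longrightarrow> i < n \<Longrightarrow> \<sigma> i < (n::nat)"
  using permutes_in_image[of \<sigma> "{..<n}" i] by simp

lemma perm_eq_iff_agree:
  assumes s: "\<sigma> permutes A" and t: "\<tau> permutes A"
  shows "(\<forall>i\<in>A. \<sigma> i = \<tau> i) \<longleftrightarrow> \<tau> = \<sigma>"
proof
  assume a: "\<forall>i\<in>A. \<sigma> i = \<tau> i"
  show "\<tau> = \<sigma>"
  proof
    fix x show "\<tau> x = \<sigma> x"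
      using a permutes_not_in[OF s, of x] permutes_not_in[OF t, of x] by (cases "x \<in> A") auto
  qed
qed auto

context dpp_set begin

lemma orth_one: "a < m \<Longrightarrow> c < m \<Longrightarrow> (\<integral>y. 1 * \<phi> a y * \<phi> c y \<partial>M) = (if a = c then 1 else 0)"
  using orth by simp

lemma int_prod_phi: "a < m \<Longrightarrow> c < m \<Longrightarrow> integrable M (\<lambda>y. \<phi> a y * \<phi> c y)"
proof -
  assume a: "a < m" and c: "c < m"
  have "integrable M (\<lambda>y. ((\<phi> a y)\<^sup>2 + (\<phi> c y)\<^sup>2))"
    using \<phi>sq[OF a] \<phi>sq[OF c] by simp
  then show ?thesis
  proof (rule Bochner_Integration.integrable_bound)
    show "(\<lambda>y. \<phi> a y * \<phi> c y) \<in> borel_measurable M" using \<phi>meas[OF a] \<phi>meas[OF c] by simp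
    show "AE y in M. norm (\<phi> a y * \<phi> c y) \<le> norm ((\<phi> a y)\<^sup>2 + (\<phi> c y)\<^sup>2)"
      using abs_mult_le_sq by (auto intro!: AE_I2)
  qed
qed

lemma perms_finite: "finite {\<sigma>. \<sigma> permutes {..<m}}"
  by (rule finite_permutations) simp

lemma card_perms: "card {\<sigma>. \<sigma> permutes {..<m}} = fact m"
  by (rule card_permutations) auto

lemma mass: "integrable PM (\<lambda>x. (dphi x)\<^sup>2)" "(\<integral>x. (dphi x)\<^sup>2 \<partial>PM) = fact m"
proof -
  let ?h = "\<lambda>(i::nat) (y::'a). 1::real"
  have hi: "integrable M (\<lambda>y. ?h i y * \<phi> a y * \<phi> c y)" if "a < m" "c < m" for i a c
    using int_prod_phi[OF that] by simp
  from leibniz_integral[of ?h, OF hi] show "integrable PM (\<lambda>x. (dphi x)\<^sup>2)" by simp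
  have trm: "real_of_int (sign \<sigma> * sign \<tau>) * (\<Prod>i<m. \<integral>y. ?h i y * \<phi> (\<sigma> i) y * \<phi> (\<tau> i) y \<partial>M)
      = (if \<tau> = \<sigma> then 1 else 0)" if s: "\<sigma> permutes {..<m}" and t: "\<tau> permutes {..<m}" for \<sigma> \<tau>
  proof -
    have "(\<Prod>i<m. \<integral>y. ?h i y * \<phi> (\<sigma> i) y * \<phi> (\<tau> i) y \<partial>M) = (\<Prod>i<m. if \<sigma> i = \<tau> i then 1 else 0)"
      using s t by (intro prod.cong refl orth_one) (auto simp: perm_lt)
    also have "\<dots> = (if \<tau> = \<sigma> then 1 else 0)"
      using perm_eq_iff_agree[OF s t] by (subst prod_indicator_real) auto
    finally show ?thesis by (auto simp: sign_def)
  qed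
  have "(\<integral>x. (dphi x)\<^sup>2 \<partial>PM) = (\<integral>x. (\<Prod>i<m. ?h i (x i)) * (dphi x)\<^sup>2 \<partial>PM)" by simp
  also have "\<dots> = (\<Sum>\<sigma> | \<sigma> permutes {..<m}. \<Sum>\<tau> | \<tau> permutes {..<m}. real_of_int (sign \<sigma> * sign \<tau>) *
        (\<Prod>i<m. \<integral>y. ?h i y * \<phi> (\<sigma> i) y * \<phi> (\<tau> i) y \<partial>M))"
    by (rule leibniz_integral(2)[of ?h, OF hi])
  also have "\<dots> = (\<Sum>\<sigma> | \<sigma> permutes {..<m}. \<Sum>\<tau> | \<tau> permutes {..<m}. (if \<tau> = \<sigma> then 1 else 0))"
    by (intro sum.cong refl trm) auto
  also have "\<dots> = (\<Sum>\<sigma> | \<sigma> permutes {..<m}. 1)"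
    by (intro sum.cong refl) (simp add: sum.delta[OF perms_finite])
  also have "\<dots> = fact m" using card_perms by simp
  finally show "(\<integral>x. (dphi x)\<^sup>2 \<partial>PM) = fact m" .
qed


lemma one_point:
  assumes p: "p < m" and hi: "\<And>a c. a < m \<Longrightarrow> c < m \<Longrightarrow> integrable M (\<lambda>y. h y * \<phi> a y * \<phi> c y)"
  shows "integrable PM (\<lambda>x. h (x p) * (dphi x)\<^sup>2)"
    "(\<integral>x. h (x p) * (dphi x)\<^sup>2 \<partial>PM) = (\<Sum>\<sigma> | \<sigma> permutes {..<m}. \<integral>y. h y * \<phi> (\<sigma> p) y * \<phi> (\<sigma> p) y \<partial>M)"
proof -
  define hh where "hh i = (if i = p then h else (\<lambda>_. 1))" for i
  have hhi: "integrable M (\<lambda>y. hh i y * \<phi> a y * \<phi> c y)" if "a < m" "c < m" for i a c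
    using hi[OF that] int_prod_phi[OF that] by (simp add: hh_def)
  have prod: "(\<Prod>i<m. hh i (x i)) = h (x p)" for x
    using p by (subst prod.remove[of _ p]) (auto simp: hh_def)
  from leibniz_integral(1)[of hh, OF hhi] show "integrable PM (\<lambda>x. h (x p) * (dphi x)\<^sup>2)"
    by (simp add: prod)
  have trm: "real_of_int (sign \<sigma> * sign \<tau>) * (\<Prod>i<m. \<integral>y. hh i y * \<phi> (\<sigma> i) y * \<phi> (\<tau> i) y \<partial>M)
      = (if \<tau> = \<sigma> then (\<integral>y. h y * \<phi> (\<sigma> p) y * \<phi> (\<sigma> p) y \<partial>M) else 0)"
    if s: "\<sigma> permutes {..<m}" and t: "\<tau> permutes {..<m}" for \<sigma> \<tau>
  proof -
    have "(\<Prod>i<m. \<integral>y. hh i y * \<phi> (\<sigma> i) y * \<phi> (\<tau> i) y \<partial>M) =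
      (\<integral>y. h y * \<phi> (\<sigma> p) y * \<phi> (\<tau> p) y \<partial>M) *
      (\<Prod>i\<in>{..<m} - {p}. \<integral>y. hh i y * \<phi> (\<sigma> i) y * \<phi> (\<tau> i) y \<partial>M)"
      using p by (subst prod.remove[of _ p]) (auto simp: hh_def)
    also have "(\<Prod>i\<in>{..<m} - {p}. \<integral>y. hh i y * \<phi> (\<sigma> i) y * \<phi> (\<tau> i) y \<partial>M)
       = (\<Prod>i\<in>{..<m} - {p}. if \<sigma> i = \<tau> i then 1 else 0)"
      using s t by (intro prod.cong refl) (auto simp: hh_def perm_lt orth)
    also have "\<dots> = (if \<tau> = \<sigma> then 1 else 0)"
    proof -
      have "(\<forall>i\<in>{..<m} - {p}. \<sigma> i = \<tau> i) \<longleftrightarrow> \<tau> = \<sigma>"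
        using perm_agree_one[OF s t, of p] p by auto
      then show ?thesis by (subst prod_indicator_real) auto
    qed
    finally show ?thesis by (auto simp: sign_def)
  qed
  have "(\<integral>x. h (x p) * (dphi x)\<^sup>2 \<partial>PM) = (\<integral>x. (\<Prod>i<m. hh i (x i)) * (dphi x)\<^sup>2 \<partial>PM)"
    by (simp add: prod)
  also have "\<dots> = (\<Sum>\<sigma> | \<sigma> permutes {..<m}. \<Sum>\<tau> | \<tau> permutes {..<m}. real_of_int (sign \<sigma> * sign \<tau>) *
        (\<Prod>i<m. \<integral>y. hh i y * \<phi> (\<sigma> i) y * \<phi> (\<tau> i) y \<partial>M))"
    by (rule leibniz_integral(2)[of hh, OF hhi])
  also have "\<dots> = (\<Sum>\<sigma> | \<sigma> permutes {..<m}. \<Sum>\<tau> | \<tau> permutes {..<m}.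
       (if \<tau> = \<sigma> then (\<integral>y. h y * \<phi> (\<sigma> p) y * \<phi> (\<sigma> p) y \<partial>M) else 0))"
    by (intro sum.cong refl trm) auto
  also have "\<dots> = (\<Sum>\<sigma> | \<sigma> permutes {..<m}. \<integral>y. h y * \<phi> (\<sigma> p) y * \<phi> (\<sigma> p) y \<partial>M)"
    by (intro sum.cong refl) (simp add: sum.delta[OF perms_finite])
  finally show "(\<integral>x. h (x p) * (dphi x)\<^sup>2 \<partial>PM) = (\<Sum>\<sigma> | \<sigma> permutes {..<m}. \<integral>y. h y * \<phi> (\<sigma> p) y * \<phi> (\<sigma> p) y \<partial>M)" .
qed

lemma two_point:
  assumes p: "p < m" and q: "q < m" and pq: "p \<noteq> q"
    and hi: "\<And>a c. a < m \<Longrightarrow> c < m \<Longrightarrow> integrable M (\<lambda>y. u y * \<phi> a y * \<phi> c y)"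
  defines "U \<equiv> \<lambda>a c. \<integral>y. u y * \<phi> a y * \<phi> c y \<partial>M"
  shows "integrable PM (\<lambda>x. u (x p) * u (x q) * (dphi x)\<^sup>2)"
    "(\<integral>x. u (x p) * u (x q) * (dphi x)\<^sup>2 \<partial>PM) =
      (\<Sum>\<sigma> | \<sigma> permutes {..<m}. U (\<sigma> p) (\<sigma> p) * U (\<sigma> q) (\<sigma> q) - U (\<sigma> p) (\<sigma> q) * U (\<sigma> q) (\<sigma> p))"
proof -
  define hh where "hh i = (if i = p \<or> i = q then u else (\<lambda>_. 1))" for i
  have hhi: "integrable M (\<lambda>y. hh i y * \<phi> a y * \<phi> c y)" if "a < m" "c < m" for i a c
    using hi[OF that] int_prod_phi[OF that] by (simp add: hh_def)
  have prod: "(\<Prod>i<m. hh i (x i)) = u (x p) * u (x q)" for x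
    using p q pq by (subst prod.remove[of _ p], simp, simp, subst prod.remove[of _ q]) (auto simp: hh_def)
  from leibniz_integral(1)[of hh, OF hhi] show "integrable PM (\<lambda>x. u (x p) * u (x q) * (dphi x)\<^sup>2)"
    by (simp add: prod)
  let ?t = "Transposition.transpose p q"
  have trm: "real_of_int (sign \<sigma> * sign \<tau>) * (\<Prod>i<m. \<integral>y. hh i y * \<phi> (\<sigma> i) y * \<phi> (\<tau> i) y \<partial>M)
      = (if \<tau> = \<sigma> then U (\<sigma> p) (\<sigma> p) * U (\<sigma> q) (\<sigma> q) else 0)
        + (if \<tau> = \<sigma> \<circ> ?t then - (U (\<sigma> p) (\<sigma> q) * U (\<sigma> q) (\<sigma> p)) else 0)"
    if s: "\<sigma> permutes {..<m}" and t: "\<tau> permutes {..<m}" for \<sigma> \<tau>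
  proof -
    have tperm: "\<sigma> \<circ> ?t permutes {..<m}"
      using permutes_compose[OF permutes_swap_id s] p q by auto
    have neq: "\<sigma> \<circ> ?t \<noteq> \<sigma>"
    proof
      assume "\<sigma> \<circ> ?t = \<sigma>"
      then have "\<sigma> q = \<sigma> p" by (metis comp_apply transpose_apply_first)
      then show False using pq permutes_inj[OF s] by (metis injD)
    qed
    have "(\<Prod>i<m. \<integral>y. hh i y * \<phi> (\<sigma> i) y * \<phi> (\<tau> i) y \<partial>M) =
      U (\<sigma> p) (\<tau> p) * (U (\<sigma> q) (\<tau> q) *
      (\<Prod>i\<in>{..<m} - {p} - {q}. \<integral>y. hh i y * \<phi> (\<sigma> i) y * \<phi> (\<tau> i) y \<partial>M))"
      using p q pq by (subst prod.remove[of _ p], simp, simp, subst prod.remove[of _ q])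
        (auto simp: hh_def U_def)
    also have "(\<Prod>i\<in>{..<m} - {p} - {q}. \<integral>y. hh i y * \<phi> (\<sigma> i) y * \<phi> (\<tau> i) y \<partial>M)
       = (\<Prod>i\<in>{..<m} - {p} - {q}. if \<sigma> i = \<tau> i then 1 else 0)"
      using s t by (intro prod.cong refl) (auto simp: hh_def perm_lt orth)
    also have "\<dots> = (if \<tau> = \<sigma> \<or> \<tau> = \<sigma> \<circ> ?t then 1 else 0)"
    proof -
      have "(\<forall>i\<in>{..<m} - {p} - {q}. \<sigma> i = \<tau> i) \<longleftrightarrow> \<tau> = \<sigma> \<or> \<tau> = \<sigma> \<circ> ?t"
        using perm_agree_two[OF s t, of p q] p q pq
        by (auto simp: Transposition.transpose_def split: if_splits)
      then show ?thesis by (subst prod_indicator_real) auto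
    qed
    finally have P: "(\<Prod>i<m. \<integral>y. hh i y * \<phi> (\<sigma> i) y * \<phi> (\<tau> i) y \<partial>M) =
       U (\<sigma> p) (\<tau> p) * (U (\<sigma> q) (\<tau> q) * (if \<tau> = \<sigma> \<or> \<tau> = \<sigma> \<circ> ?t then 1 else 0))" .
    have sg: "sign (\<sigma> \<circ> ?t) = - sign \<sigma>"
      using sign_compose[OF permutes_imp_permutation[OF _ s] permutation_swap_id] pq
      by (simp add: sign_swap_id)
    show ?thesis
    proof (cases "\<tau> = \<sigma>")
      case True then show ?thesis using P neq by (auto simp: sign_def)
    next
      case False
      show ?thesis
      proof (cases "\<tau> = \<sigma> \<circ> ?t")
        case True
        then show ?thesis using P neq sg
          by (auto simp: sign_def transpose_apply_first transpose_apply_second)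
      next
        case False2: False
        then show ?thesis using P False by simp
      qed
    qed
  qed
  have "(\<integral>x. u (x p) * u (x q) * (dphi x)\<^sup>2 \<partial>PM) = (\<integral>x. (\<Prod>i<m. hh i (x i)) * (dphi x)\<^sup>2 \<partial>PM)"
    by (simp add: prod)
  also have "\<dots> = (\<Sum>\<sigma> | \<sigma> permutes {..<m}. \<Sum>\<tau> | \<tau> permutes {..<m}. real_of_int (sign \<sigma> * sign \<tau>) *
        (\<Prod>i<m. \<integral>y. hh i y * \<phi> (\<sigma> i) y * \<phi> (\<tau> i) y \<partial>M))"
    by (rule leibniz_integral(2)[of hh, OF hhi])
  also have "\<dots> = (\<Sum>\<sigma> | \<sigma> permutes {..<m}. \<Sum>\<tau> | \<tau> permutes {..<m}.
       (if \<tau> = \<sigma> then U (\<sigma> p) (\<sigma> p) * U (\<sigma> q) (\<sigma> q) else 0)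
        + (if \<tau> = \<sigma> \<circ> ?t then - (U (\<sigma> p) (\<sigma> q) * U (\<sigma> q) (\<sigma> p)) else 0))"
    by (intro sum.cong refl trm) auto
  also have "\<dots> = (\<Sum>\<sigma> | \<sigma> permutes {..<m}. U (\<sigma> p) (\<sigma> p) * U (\<sigma> q) (\<sigma> q) - U (\<sigma> p) (\<sigma> q) * U (\<sigma> q) (\<sigma> p))"
  proof (intro sum.cong refl)
    fix \<sigma> assume "\<sigma> \<in> {\<sigma>. \<sigma> permutes {..<m}}"
    then have tperm: "\<sigma> \<circ> ?t permutes {..<m}"
      using permutes_compose[OF permutes_swap_id, of p "{..<m}" q \<sigma>] p q by auto
    then show "(\<Sum>\<tau> | \<tau> permutes {..<m}.
       (if \<tau> = \<sigma> then U (\<sigma> p) (\<sigma> p) * U (\<sigma> q) (\<sigma> q) else 0)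
        + (if \<tau> = \<sigma> \<circ> ?t then - (U (\<sigma> p) (\<sigma> q) * U (\<sigma> q) (\<sigma> p)) else 0))
      = U (\<sigma> p) (\<sigma> p) * U (\<sigma> q) (\<sigma> q) - U (\<sigma> p) (\<sigma> q) * U (\<sigma> q) (\<sigma> p)"
      using \<open>\<sigma> \<in> _\<close> by (simp add: sum.distrib sum.delta[OF perms_finite])
  qed
  finally show "(\<integral>x. u (x p) * u (x q) * (dphi x)\<^sup>2 \<partial>PM) =
      (\<Sum>\<sigma> | \<sigma> permutes {..<m}. U (\<sigma> p) (\<sigma> p) * U (\<sigma> q) (\<sigma> q) - U (\<sigma> p) (\<sigma> q) * U (\<sigma> q) (\<sigma> p))" .
qed

end


context dpp_set begin

definition D :: "(nat \<Rightarrow> 'a) \<Rightarrow> real" where "D x = (dphi x)\<^sup>2 / fact m"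

lemma comp_meas: "i < m \<Longrightarrow> h \<in> borel_measurable M \<Longrightarrow> (\<lambda>x. h (x i)) \<in> borel_measurable PM"
  by (rule measurable_compose[OF measurable_component_singleton]) auto

lemma dphi_meas: "dphi \<in> borel_measurable PM"
  unfolding dphi_def
proof (intro borel_measurable_sum borel_measurable_times borel_measurable_const borel_measurable_prod)
  fix \<sigma> i assume "\<sigma> \<in> {\<sigma>. \<sigma> permutes {..<m}}" "i \<in> {..<m}"
  then have "\<sigma> i < m" "i < m" by (auto simp: perm_lt)
  then show "(\<lambda>x. \<phi> (\<sigma> i) (x i)) \<in> borel_measurable PM" using comp_meas \<phi>meas by blast
qed

lemma D_meas: "D \<in> borel_measurable PM"
  unfolding D_def using dphi_meas by measurable

lemma D_nonneg: "D x \<ge> 0" by (simp add: D_def)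

lemma gamma_eq: "gammaDPP M m \<phi> = density PM (\<lambda>x. ennreal (D x))"
  unfolding gammaDPP_def D_def det_gramPhi ..

lemma int_gamma: "F \<in> borel_measurable PM \<Longrightarrow>
    integrable (gammaDPP M m \<phi>) F \<longleftrightarrow> integrable PM (\<lambda>x. D x * F x)"
  unfolding gamma_eq by (subst integrable_density) (auto simp: D_meas D_nonneg)

lemma integral_gamma: "F \<in> borel_measurable PM \<Longrightarrow>
    (\<integral>x. F x \<partial>gammaDPP M m \<phi>) = (\<integral>x. D x * F x \<partial>PM)"
  unfolding gamma_eq by (subst integral_density) (auto simp: D_meas D_nonneg)

lemma space_gamma: "space (gammaDPP M m \<phi>) = space PM"
  unfolding gamma_eq by simp

lemma sets_gamma: "sets (gammaDPP M m \<phi>) = sets PM"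
  unfolding gamma_eq by simp

lemma gamma_prob: "prob_space (gammaDPP M m \<phi>)"
proof
  have "emeasure (gammaDPP M m \<phi>) (space (gammaDPP M m \<phi>)) = (\<integral>\<^sup>+ x. ennreal (D x) \<partial>PM)"
  proof -
    have "(\<lambda>x. ennreal (D x)) \<in> borel_measurable PM" using D_meas by measurable
    then show ?thesis unfolding gamma_eq by (subst emeasure_density) (auto intro!: nn_integral_cong)
  qed
  also have "\<dots> = ennreal (\<integral>x. D x \<partial>PM)"
    using mass D_nonneg unfolding D_def
    by (intro nn_integral_eq_integral) (auto intro!: integrable_divide)
  also have "(\<integral>x. D x \<partial>PM) = 1"
    using mass unfolding D_def by simp
  finally show "emeasure (gammaDPP M m \<phi>) (space (gammaDPP M m \<phi>)) = 1" by simp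
qed

lemma perm_sum_reindex: "\<sigma> permutes {..<m} \<Longrightarrow> (\<Sum>p<m. G (\<sigma> p)) = (\<Sum>a<m. G a)"
  by (rule sum.reindex_bij_betw[OF permutes_imp_bij])

lemma E1:
  assumes hm: "h \<in> borel_measurable M"
    and hi: "\<And>a c. a < m \<Longrightarrow> c < m \<Longrightarrow> integrable M (\<lambda>y. h y * \<phi> a y * \<phi> c y)"
  shows "integrable (gammaDPP M m \<phi>) (\<lambda>x. \<Sum>i<m. h (x i))"
    "(\<integral>x. (\<Sum>i<m. h (x i)) \<partial>gammaDPP M m \<phi>) = (\<Sum>a<m. \<integral>y. h y * \<phi> a y * \<phi> a y \<partial>M)"
proof -
  have meas: "(\<lambda>x. \<Sum>i<m. h (x i)) \<in> borel_measurable PM"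
    using comp_meas[OF _ hm] by (intro borel_measurable_sum) auto
  have eq: "D x * (\<Sum>i<m. h (x i)) = (\<Sum>i<m. h (x i) * (dphi x)\<^sup>2 / fact m)" for x
    unfolding sum_distrib_left by (intro sum.cong) (auto simp: D_def)
  show "integrable (gammaDPP M m \<phi>) (\<lambda>x. \<Sum>i<m. h (x i))"
    unfolding int_gamma[OF meas] eq
    using one_point(1)[OF _ hi] by (intro Bochner_Integration.integrable_sum integrable_divide) auto
  have "(\<integral>x. (\<Sum>i<m. h (x i)) \<partial>gammaDPP M m \<phi>) = (\<Sum>i<m. \<integral>x. h (x i) * (dphi x)\<^sup>2 \<partial>PM) / fact m"
    unfolding integral_gamma[OF meas] eq
    using one_point(1)[OF _ hi]
    by (subst Bochner_Integration.integral_sum) (auto simp: sum_divide_distrib intro!: integrable_divide)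
  also have "\<dots> = (\<Sum>i<m. \<Sum>\<sigma> | \<sigma> permutes {..<m}. \<integral>y. h y * \<phi> (\<sigma> i) y * \<phi> (\<sigma> i) y \<partial>M) / fact m"
    using one_point(2)[OF _ hi] by simp
  also have "\<dots> = (\<Sum>\<sigma> | \<sigma> permutes {..<m}. \<Sum>i<m. \<integral>y. h y * \<phi> (\<sigma> i) y * \<phi> (\<sigma> i) y \<partial>M) / fact m"
    by (subst sum.swap) simp
  also have "\<dots> = (\<Sum>\<sigma> | \<sigma> permutes {..<m}. \<Sum>a<m. \<integral>y. h y * \<phi> a y * \<phi> a y \<partial>M) / fact m"
  proof -
    have "(\<Sum>i<m. \<integral>y. h y * \<phi> (\<sigma> i) y * \<phi> (\<sigma> i) y \<partial>M) = (\<Sum>a<m. \<integral>y. h y * \<phi> a y * \<phi> a y \<partial>M)"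
      if "\<sigma> permutes {..<m}" for \<sigma>
      using perm_sum_reindex[OF that, where G="\<lambda>a. \<integral>y. h y * \<phi> a y * \<phi> a y \<partial>M"] by simp
    then show ?thesis by simp
  qed
  also have "\<dots> = (\<Sum>a<m. \<integral>y. h y * \<phi> a y * \<phi> a y \<partial>M)"
    using card_perms by simp
  finally show "(\<integral>x. (\<Sum>i<m. h (x i)) \<partial>gammaDPP M m \<phi>) = (\<Sum>a<m. \<integral>y. h y * \<phi> a y * \<phi> a y \<partial>M)" .
qed


lemma E2:
  assumes um: "u \<in> borel_measurable M"
    and ui: "\<And>a c. a < m \<Longrightarrow> c < m \<Longrightarrow> integrable M (\<lambda>y. u y * \<phi> a y * \<phi> c y)"
    and u2i: "\<And>a c. a < m \<Longrightarrow> c < m \<Longrightarrow> integrable M (\<lambda>y. u y * u y * \<phi> a y * \<phi> c y)"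
  defines "U \<equiv> \<lambda>a c. \<integral>y. u y * \<phi> a y * \<phi> c y \<partial>M"
  shows "integrable (gammaDPP M m \<phi>) (\<lambda>x. (\<Sum>i<m. u (x i))\<^sup>2)"
    "(\<integral>x. (\<Sum>i<m. u (x i))\<^sup>2 \<partial>gammaDPP M m \<phi>) =
       (\<Sum>a<m. \<integral>y. u y * u y * \<phi> a y * \<phi> a y \<partial>M) + ((\<Sum>a<m. U a a)\<^sup>2 - (\<Sum>a<m. \<Sum>c<m. U a c * U c a))"
proof -
  let ?B = "\<lambda>x. \<Sum>p<m. \<Sum>q\<in>{..<m} - {p}. u (x p) * u (x q)"
  have split: "(\<Sum>i<m. u (x i))\<^sup>2 = (\<Sum>i<m. u (x i) * u (x i)) + ?B x" for x
  proof -
    have "(\<Sum>i<m. u (x i))\<^sup>2 = (\<Sum>p<m. \<Sum>q<m. u (x p) * u (x q))"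
      by (simp add: power2_eq_square sum_product)
    also have "\<dots> = (\<Sum>p<m. u (x p) * u (x p) + (\<Sum>q\<in>{..<m} - {p}. u (x p) * u (x q)))"
      by (intro sum.cong refl) (simp add: sum.remove[of "{..<m}"])
    finally show ?thesis by (simp add: sum.distrib)
  qed
  have h2m: "(\<lambda>y. u y * u y) \<in> borel_measurable M" using um by simp
  have BmB: "?B \<in> borel_measurable PM"
    using comp_meas[OF _ um] by (intro borel_measurable_sum borel_measurable_times) auto
  have eqB: "D x * ?B x = (\<Sum>p<m. \<Sum>q\<in>{..<m} - {p}. u (x p) * u (x q) * (dphi x)\<^sup>2 / fact m)" for x
    unfolding sum_distrib_left by (intro sum.cong refl) (auto simp: D_def)
  have tpi: "integrable PM (\<lambda>x. u (x p) * u (x q) * (dphi x)\<^sup>2)" if "p < m" "q \<in> {..<m} - {p}" for p q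
    using two_point(1)[of p q u, OF _ _ _ ui] that by auto
  have Bi: "integrable (gammaDPP M m \<phi>) ?B"
    unfolding int_gamma[OF BmB] eqB
    by (intro Bochner_Integration.integrable_sum integrable_divide tpi) auto
  have Ai: "integrable (gammaDPP M m \<phi>) (\<lambda>x. \<Sum>i<m. u (x i) * u (x i))"
    using E1(1)[OF h2m u2i] by simp
  show "integrable (gammaDPP M m \<phi>) (\<lambda>x. (\<Sum>i<m. u (x i))\<^sup>2)"
    unfolding split using Ai Bi by simp
  define F where "F a c = U a a * U c c - U a c * U c a" for a c
  have "(\<integral>x. ?B x \<partial>gammaDPP M m \<phi>) = (\<Sum>p<m. \<Sum>q\<in>{..<m} - {p}. \<integral>x. u (x p) * u (x q) * (dphi x)\<^sup>2 \<partial>PM) / fact m"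
  proof -
    have "(\<integral>x. ?B x \<partial>gammaDPP M m \<phi>) = (\<integral>x. (\<Sum>p<m. \<Sum>q\<in>{..<m} - {p}. u (x p) * u (x q) * (dphi x)\<^sup>2 / fact m) \<partial>PM)"
      unfolding integral_gamma[OF BmB] eqB ..
    also have "\<dots> = (\<Sum>p<m. \<integral>x. (\<Sum>q\<in>{..<m} - {p}. u (x p) * u (x q) * (dphi x)\<^sup>2 / fact m) \<partial>PM)"
      by (rule Bochner_Integration.integral_sum) (auto intro!: Bochner_Integration.integrable_sum integrable_divide tpi)
    also have "\<dots> = (\<Sum>p<m. \<Sum>q\<in>{..<m} - {p}. (\<integral>x. u (x p) * u (x q) * (dphi x)\<^sup>2 \<partial>PM) / fact m)"
    proof (intro sum.cong refl)
      fix p assume p: "p \<in> {..<m}"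
      show "(\<integral>x. (\<Sum>q\<in>{..<m} - {p}. u (x p) * u (x q) * (dphi x)\<^sup>2 / fact m) \<partial>PM) =
         (\<Sum>q\<in>{..<m} - {p}. (\<integral>x. u (x p) * u (x q) * (dphi x)\<^sup>2 \<partial>PM) / fact m)"
        using p by (subst Bochner_Integration.integral_sum) (auto intro!: integrable_divide tpi)
    qed
    finally show ?thesis by (simp add: sum_divide_distrib)
  qed
  also have "\<dots> = (\<Sum>p<m. \<Sum>q\<in>{..<m} - {p}. \<Sum>\<sigma> | \<sigma> permutes {..<m}. F (\<sigma> p) (\<sigma> q)) / fact m"
  proof -
    have "(\<integral>x. u (x p) * u (x q) * (dphi x)\<^sup>2 \<partial>PM) = (\<Sum>\<sigma> | \<sigma> permutes {..<m}. F (\<sigma> p) (\<sigma> q))"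
      if "p < m" "q \<in> {..<m} - {p}" for p q
      using two_point(2)[of p q u, OF _ _ _ ui] that unfolding F_def U_def by auto
    then show ?thesis by simp
  qed
  also have "\<dots> = (\<Sum>\<sigma> | \<sigma> permutes {..<m}. \<Sum>p<m. \<Sum>q\<in>{..<m} - {p}. F (\<sigma> p) (\<sigma> q)) / fact m"
    by (simp add: sum.swap[of _ "{\<sigma>. \<sigma> permutes {..<m}}"])
  also have "\<dots> = (\<Sum>\<sigma> | \<sigma> permutes {..<m}. \<Sum>a<m. \<Sum>c<m. F a c) / fact m"
  proof -
    have "(\<Sum>p<m. \<Sum>q\<in>{..<m} - {p}. F (\<sigma> p) (\<sigma> q)) = (\<Sum>a<m. \<Sum>c<m. F a c)"
      if s: "\<sigma> permutes {..<m}" for \<sigma>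
    proof -
      have "(\<Sum>p<m. \<Sum>q\<in>{..<m} - {p}. F (\<sigma> p) (\<sigma> q)) = (\<Sum>p<m. \<Sum>q<m. F (\<sigma> p) (\<sigma> q))"
      proof (rule sum.cong[OF refl])
        fix p assume "p \<in> {..<m}"
        then show "(\<Sum>q\<in>{..<m} - {p}. F (\<sigma> p) (\<sigma> q)) = (\<Sum>q<m. F (\<sigma> p) (\<sigma> q))"
          by (simp add: sum_diff1 F_def)
      qed
      also have "\<dots> = (\<Sum>p<m. \<Sum>c<m. F (\<sigma> p) c)"
        using perm_sum_reindex[OF s, where G="F (\<sigma> p)" for p] by simp
      also have "\<dots> = (\<Sum>a<m. \<Sum>c<m. F a c)"
        using perm_sum_reindex[OF s, where G="\<lambda>a. \<Sum>c<m. F a c"] by simp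
      finally show ?thesis .
    qed
    then show ?thesis by simp
  qed
  also have "\<dots> = (\<Sum>a<m. \<Sum>c<m. F a c)" using card_perms by simp
  also have "\<dots> = (\<Sum>a<m. U a a)\<^sup>2 - (\<Sum>a<m. \<Sum>c<m. U a c * U c a)"
    unfolding F_def power2_eq_square sum_product sum_subtractf ..
  finally have IB: "(\<integral>x. ?B x \<partial>gammaDPP M m \<phi>) = (\<Sum>a<m. U a a)\<^sup>2 - (\<Sum>a<m. \<Sum>c<m. U a c * U c a)" .
  have IA: "(\<integral>x. (\<Sum>i<m. u (x i) * u (x i)) \<partial>gammaDPP M m \<phi>) = (\<Sum>a<m. \<integral>y. u y * u y * \<phi> a y * \<phi> a y \<partial>M)"
    using E1(2)[OF h2m u2i] by simp
  show "(\<integral>x. (\<Sum>i<m. u (x i))\<^sup>2 \<partial>gammaDPP M m \<phi>) =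
       (\<Sum>a<m. \<integral>y. u y * u y * \<phi> a y * \<phi> a y \<partial>M) + ((\<Sum>a<m. U a a)\<^sup>2 - (\<Sum>a<m. \<Sum>c<m. U a c * U c a))"
    unfolding split using Ai Bi IA IB by simp
qed

end


lemma psf_gen: "prob_space N \<Longrightarrow> product_sigma_finite (\<lambda>_::nat. N)"
  unfolding product_sigma_finite_def using prob_space_imp_sigma_finite by blast

lemma prod_one:
  fixes F :: "'a \<Rightarrow> real" and r :: nat
  assumes N: "prob_space N" and j: "j < r" and F: "integrable N F"
  shows "integrable (PiM {..<r} (\<lambda>_. N)) (\<lambda>x. F (x j))"
    "(\<integral>x. F (x j) \<partial>PiM {..<r} (\<lambda>_. N)) = (\<integral>x. F x \<partial>N)"
proof -
  define G where "G l = (if l = j then F else (\<lambda>_. 1))" for l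
  have Gi: "integrable N (G l)" for l
  proof -
    have "integrable N (\<lambda>_. 1::real)" using finite_measure.integrable_const[OF prob_space.axioms(1)[OF N]] .
    then show ?thesis using F by (simp add: G_def)
  qed
  have prod: "(\<Prod>l<r. G l (x l)) = F (x j)" for x
    using j by (subst prod.remove[of _ j]) (auto simp: G_def)
  show "integrable (PiM {..<r} (\<lambda>_. N)) (\<lambda>x. F (x j))"
    using product_sigma_finite.product_integrable_prod[OF psf_gen[OF N], of "{..<r}" G] Gi
    by (simp add: prod)
  have "(\<integral>x. F (x j) \<partial>PiM {..<r} (\<lambda>_. N)) = (\<Prod>l<r. integral\<^sup>L N (G l))"
    using product_sigma_finite.product_integral_prod[OF psf_gen[OF N], of "{..<r}" G] Gi
    by (simp add: prod)
  also have "\<dots> = (\<integral>x. F x \<partial>N)"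
    using j prob_space.prob_space[OF N] by (subst prod.remove[of _ j]) (auto simp: G_def)
  finally show "(\<integral>x. F (x j) \<partial>PiM {..<r} (\<lambda>_. N)) = (\<integral>x. F x \<partial>N)" .
qed

lemma prod_two:
  fixes F :: "'a \<Rightarrow> real" and r :: nat
  assumes N: "prob_space N" and j: "j < r" and j': "j' < r" and jj: "j \<noteq> j'" and F: "integrable N F"
  shows "integrable (PiM {..<r} (\<lambda>_. N)) (\<lambda>x. F (x j) * F (x j'))"
    "(\<integral>x. F (x j) * F (x j') \<partial>PiM {..<r} (\<lambda>_. N)) = (\<integral>x. F x \<partial>N) * (\<integral>x. F x \<partial>N)"
proof -
  define G where "G l = (if l = j \<or> l = j' then F else (\<lambda>_. 1))" for l
  have Gi: "integrable N (G l)" for l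
  proof -
    have "integrable N (\<lambda>_. 1::real)" using finite_measure.integrable_const[OF prob_space.axioms(1)[OF N]] .
    then show ?thesis using F by (simp add: G_def)
  qed
  have prod: "(\<Prod>l<r. G l (x l)) = F (x j) * F (x j')" for x
    using j j' jj by (subst prod.remove[of _ j], simp, simp, subst prod.remove[of _ j']) (auto simp: G_def)
  show "integrable (PiM {..<r} (\<lambda>_. N)) (\<lambda>x. F (x j) * F (x j'))"
    using product_sigma_finite.product_integrable_prod[OF psf_gen[OF N], of "{..<r}" G] Gi
    by (simp add: prod)
  have "(\<integral>x. F (x j) * F (x j') \<partial>PiM {..<r} (\<lambda>_. N)) = (\<Prod>l<r. integral\<^sup>L N (G l))"
    using product_sigma_finite.product_integral_prod[OF psf_gen[OF N], of "{..<r}" G] Gi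
    by (simp add: prod)
  also have "\<dots> = (\<integral>x. F x \<partial>N) * (\<integral>x. F x \<partial>N)"
    using j j' jj prob_space.prob_space[OF N]
    by (subst prod.remove[of _ j], simp, simp, subst prod.remove[of _ j']) (auto simp: G_def)
  finally show "(\<integral>x. F (x j) * F (x j') \<partial>PiM {..<r} (\<lambda>_. N)) = (\<integral>x. F x \<partial>N) * (\<integral>x. F x \<partial>N)" .
qed

lemma prod_sq:
  fixes Y :: "'a \<Rightarrow> real" and r :: nat
  assumes N: "prob_space N" and Y: "integrable N Y" and Y2: "integrable N (\<lambda>x. (Y x)\<^sup>2)"
    and Y0: "(\<integral>x. Y x \<partial>N) = 0"
  shows "integrable (PiM {..<r} (\<lambda>_. N)) (\<lambda>x. (\<Sum>j<r. Y (x j))\<^sup>2)"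
    "(\<integral>x. (\<Sum>j<r. Y (x j))\<^sup>2 \<partial>PiM {..<r} (\<lambda>_. N)) = real r * (\<integral>x. (Y x)\<^sup>2 \<partial>N)"
proof -
  let ?P = "PiM {..<r} (\<lambda>_. N)"
  have split: "(\<Sum>j<r. Y (x j))\<^sup>2 = (\<Sum>j<r. (Y (x j))\<^sup>2) + (\<Sum>j<r. \<Sum>j'\<in>{..<r} - {j}. Y (x j) * Y (x j'))" for x
  proof -
    have "(\<Sum>j<r. Y (x j))\<^sup>2 = (\<Sum>j<r. \<Sum>j'<r. Y (x j) * Y (x j'))"
      by (simp add: power2_eq_square sum_product)
    also have "\<dots> = (\<Sum>j<r. (Y (x j))\<^sup>2 + (\<Sum>j'\<in>{..<r} - {j}. Y (x j) * Y (x j')))"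
      by (intro sum.cong refl) (simp add: sum.remove[of "{..<r}"] power2_eq_square)
    finally show ?thesis by (simp add: sum.distrib)
  qed
  have i1: "integrable ?P (\<lambda>x. (Y (x j))\<^sup>2)" if "j < r" for j
    using prod_one(1)[OF N that Y2] .
  have i2: "integrable ?P (\<lambda>x. Y (x j) * Y (x j'))" if "j < r" "j' \<in> {..<r} - {j}" for j j'
    using prod_two(1)[OF N that(1) _ _ Y] that by auto
  show "integrable ?P (\<lambda>x. (\<Sum>j<r. Y (x j))\<^sup>2)"
    unfolding split by (intro Bochner_Integration.integrable_add Bochner_Integration.integrable_sum i1 i2) auto
  have "(\<integral>x. (\<Sum>j<r. Y (x j))\<^sup>2 \<partial>?P) =
     (\<Sum>j<r. \<integral>x. (Y (x j))\<^sup>2 \<partial>?P) + (\<Sum>j<r. \<integral>x. (\<Sum>j'\<in>{..<r} - {j}. Y (x j) * Y (x j')) \<partial>?P)"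
    unfolding split
    by (subst Bochner_Integration.integral_add, (auto intro!: Bochner_Integration.integrable_sum i1 i2)[2],
        subst Bochner_Integration.integral_sum, (auto intro!: i1)[1],
        subst Bochner_Integration.integral_sum, (auto intro!: Bochner_Integration.integrable_sum i2)[1]) simp
  also have "(\<Sum>j<r. \<integral>x. (\<Sum>j'\<in>{..<r} - {j}. Y (x j) * Y (x j')) \<partial>?P) = 0"
  proof (intro sum.neutral ballI)
    fix j assume j: "j \<in> {..<r}"
    have "(\<integral>x. (\<Sum>j'\<in>{..<r} - {j}. Y (x j) * Y (x j')) \<partial>?P) = (\<Sum>j'\<in>{..<r} - {j}. \<integral>x. Y (x j) * Y (x j') \<partial>?P)"
      using j by (intro Bochner_Integration.integral_sum i2) auto
    also have "\<dots> = 0"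
      using j prod_two(2)[OF N _ _ _ Y] Y0 by (intro sum.neutral ballI) auto
    finally show "(\<integral>x. (\<Sum>j'\<in>{..<r} - {j}. Y (x j) * Y (x j')) \<partial>?P) = 0" .
  qed
  also have "(\<Sum>j<r. \<integral>x. (Y (x j))\<^sup>2 \<partial>?P) = (\<Sum>j<r. \<integral>x. (Y x)\<^sup>2 \<partial>N)"
    using prod_one(2)[OF N _ Y2, of _ r] by simp
  finally show "(\<integral>x. (\<Sum>j<r. Y (x j))\<^sup>2 \<partial>?P) = real r * (\<integral>x. (Y x)\<^sup>2 \<partial>N)" by simp
qed


definition qf :: "real mat \<Rightarrow> nat \<Rightarrow> (nat \<Rightarrow> real) \<Rightarrow> real" where
  "qf A n v = (\<Sum>k<n. \<Sum>l<n. v k * A $$ (k, l) * v l)"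

definition nsq :: "nat \<Rightarrow> (nat \<Rightarrow> real) \<Rightarrow> real" where
  "nsq n v = (\<Sum>k<n. (v k)\<^sup>2)"

lemma qf_expand:
  assumes sym: "\<And>k l. k < n \<Longrightarrow> l < n \<Longrightarrow> A $$ (k, l) = A $$ (l, k)"
  shows "qf A n (\<lambda>k. v k + t * u k) = qf A n v + 2 * t * (\<Sum>k<n. u k * (\<Sum>l<n. A $$ (k, l) * v l)) + t\<^sup>2 * qf A n u"
proof -
  have e: "(v k + t * u k) * A $$ (k, l) * (v l + t * u l) =
     v k * A $$ (k, l) * v l + t * (u k * A $$ (k, l) * v l) + t * (v k * A $$ (k, l) * u l)
      + t\<^sup>2 * (u k * A $$ (k, l) * u l)" for k l
    by (simp add: algebra_simps power2_eq_square)
  have sw: "(\<Sum>k<n. \<Sum>l<n. v k * A $$ (k, l) * u l) = (\<Sum>k<n. \<Sum>l<n. u k * A $$ (k, l) * v l)"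
  proof -
    have "(\<Sum>k<n. \<Sum>l<n. v k * A $$ (k, l) * u l) = (\<Sum>l<n. \<Sum>k<n. v k * A $$ (k, l) * u l)"
      by (rule sum.swap)
    also have "\<dots> = (\<Sum>l<n. \<Sum>k<n. u l * A $$ (l, k) * v k)"
      using sym by (intro sum.cong refl) (simp add: mult_ac)
    finally show ?thesis .
  qed
  have "qf A n (\<lambda>k. v k + t * u k) = qf A n v + t * (\<Sum>k<n. \<Sum>l<n. u k * A $$ (k, l) * v l)
      + t * (\<Sum>k<n. \<Sum>l<n. v k * A $$ (k, l) * u l) + t\<^sup>2 * qf A n u"
    unfolding qf_def e by (simp add: sum.distrib sum_distrib_left)
  also have "\<dots> = qf A n v + 2 * t * (\<Sum>k<n. u k * (\<Sum>l<n. A $$ (k, l) * v l)) + t\<^sup>2 * qf A n u"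
    unfolding sw by (simp add: sum_distrib_left mult_ac)
  finally show ?thesis .
qed

lemma quad_zero_lin:
  fixes a b :: real
  assumes "\<And>t. 0 \<le> 2 * t * a + t\<^sup>2 * b" and "b \<ge> 0"
  shows "a = 0"
proof (rule ccontr)
  assume a: "a \<noteq> 0"
  define t where "t = - a / (b + 1)"
  have b1: "b + 1 \<noteq> 0" using \<open>b \<ge> 0\<close> by simp
  have a_eq: "a = - t * (b + 1)" using b1 by (simp add: t_def)
  have t0: "t \<noteq> 0" using a a_eq by auto
  have "0 \<le> 2 * t * a + t\<^sup>2 * b" by fact
  also have "2 * t * a + t\<^sup>2 * b = - (t\<^sup>2 * (b + 2))"
    unfolding a_eq by (simp add: power2_eq_square algebra_simps)
  also have "\<dots> < 0" using t0 \<open>b \<ge> 0\<close> by (simp add: mult_pos_pos)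
  finally show False by simp
qed

lemma qf_min_exists:
  assumes n: "n > 0"
  shows "\<exists>v0. nsq n v0 = 1 \<and> (\<forall>v. qf A n v \<ge> qf A n v0 * nsq n v)"
proof -
  let ?X = "product_topology (\<lambda>_. euclideanreal) {..<n}"
  let ?P = "PiE {..<n} (\<lambda>_. {-1..1::real})"
  let ?C = "{v \<in> topspace ?X. nsq n v = 1} \<inter> ?P"
  have proj: "continuous_map ?X euclideanreal (\<lambda>x. x k)" if "k < n" for k
    using continuous_map_product_projection[of k "{..<n}" "\<lambda>_. euclideanreal"] that by simp
  have contN: "continuous_map ?X euclideanreal (nsq n)"
  proof -
    have "continuous_map ?X euclideanreal (\<lambda>x. \<Sum>k<n. x k * x k)"
      by (rule continuous_map_sum) (auto intro: continuous_map_real_mult proj)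
    then show ?thesis unfolding nsq_def power2_eq_square .
  qed
  have contQ: "continuous_map ?X euclideanreal (qf A n)"
  proof -
    have c: "continuous_map ?X euclideanreal (\<lambda>x. x k * A $$ (k, l) * x l)" if "k < n" "l < n" for k l
      by (intro continuous_map_real_mult proj that continuous_map_const[THEN iffD2]) auto
    have "continuous_map ?X euclideanreal (\<lambda>x. \<Sum>k<n. \<Sum>l<n. x k * A $$ (k, l) * x l)"
      by (rule continuous_map_sum, simp, rule continuous_map_sum) (auto intro: c)
    then show ?thesis unfolding qf_def .
  qed
  have cP: "compactin ?X ?P"
    unfolding compactin_PiE by (simp add: compact_Icc)
  have clC: "closedin ?X {v \<in> topspace ?X. nsq n v = 1}"
  proof -
    have "closedin euclideanreal {1::real}" by simp
    from closedin_continuous_map_preimage[OF contN this] show ?thesis by simp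
  qed
  have cC: "compactin ?X ?C" by (rule closed_Int_compactin[OF clC cP])
  define e0 where "e0 = (\<lambda>k::nat. if k = 0 then 1 else (0::real))"
  have e0C: "restrict e0 {..<n} \<in> ?C"
  proof -
    have "nsq n (restrict e0 {..<n}) = nsq n e0" by (simp add: nsq_def)
    also have "nsq n e0 = (\<Sum>k<n. if k = 0 then 1 else 0)"
      unfolding nsq_def e0_def by (intro sum.cong) auto
    also have "\<dots> = 1" using n by (simp add: sum.delta)
    finally have "nsq n (restrict e0 {..<n}) = 1" .
    moreover have "restrict e0 {..<n} \<in> ?P" by (auto simp: e0_def)
    moreover have "restrict e0 {..<n} \<in> topspace ?X" by simp
    ultimately show ?thesis by blast
  qed
  have cQ: "compact (qf A n ` ?C)"
    using image_compactin[OF cC contQ] compactin_euclidean_iff by blast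
  have neQ: "qf A n ` ?C \<noteq> {}" using e0C by blast
  obtain q where q: "q \<in> qf A n ` ?C" and qmin: "\<forall>y\<in>qf A n ` ?C. q \<le> y"
    using compact_attains_inf[OF cQ neQ] by blast
  then obtain v0 where v0: "v0 \<in> ?C" "q = qf A n v0" by blast
  have "qf A n v \<ge> qf A n v0 * nsq n v" for v
  proof (cases "nsq n v = 0")
    case True
    then have "\<forall>k<n. v k = 0" unfolding nsq_def
      by (subst (asm) sum_nonneg_eq_0_iff) auto
    then show ?thesis using True by (simp add: qf_def)
  next
    case False
    have nn: "nsq n v \<ge> 0" unfolding nsq_def by (simp add: sum_nonneg)
    with False have pos: "nsq n v > 0" by simp
    define s where "s = sqrt (nsq n v)"
    have s: "s > 0" "s\<^sup>2 = nsq n v" using pos nn by (auto simp: s_def)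
    define v' where "v' = restrict (\<lambda>k. v k / s) {..<n}"
    have "nsq n v' = nsq n v / s\<^sup>2"
      unfolding nsq_def v'_def by (simp add: power_divide sum_divide_distrib)
    then have n1: "nsq n v' = 1" using s pos by simp
    have bnd: "v' k \<in> {-1..1}" if "k < n" for k
    proof -
      have "(v k)\<^sup>2 \<le> nsq n v" unfolding nsq_def
        using that by (intro member_le_sum) auto
      then have "\<bar>v k\<bar> \<le> s" unfolding s_def by (simp add: real_le_rsqrt)
      then show ?thesis using that s by (auto simp: v'_def abs_le_iff divide_le_eq le_divide_eq)
    qed
    have "v' \<in> ?P" using bnd by (auto simp: v'_def)
    moreover have "v' \<in> topspace ?X" by (simp add: v'_def)
    ultimately have "v' \<in> ?C" using n1 by blast
    then have "qf A n v0 \<le> qf A n v'" using qmin v0 by auto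
    also have "qf A n v' = qf A n v / s\<^sup>2"
      unfolding qf_def v'_def by (simp add: sum_divide_distrib power2_eq_square)
    finally have "qf A n v0 \<le> qf A n v / s\<^sup>2" .
    then have "qf A n v0 * s\<^sup>2 \<le> qf A n v" using s(1) by (simp add: le_divide_eq)
    then show ?thesis using s(2) by simp
  qed
  then show ?thesis using v0 by blast
qed

lemma qf_lower_bound:
  assumes A: "A \<in> carrier_mat n n"
    and sym: "\<And>k l. k < n \<Longrightarrow> l < n \<Longrightarrow> A $$ (k, l) = A $$ (l, k)"
    and ev: "\<And>\<mu>. eigenvalue A \<mu> \<Longrightarrow> \<mu> \<ge> c"
  shows "qf A n v \<ge> c * nsq n v"
proof (cases "n = 0")
  case True then show ?thesis by (simp add: qf_def nsq_def)
next
  case False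
  then obtain v0 where v0: "nsq n v0 = 1" and mn: "\<And>v. qf A n v \<ge> qf A n v0 * nsq n v"
    using qf_min_exists[of n A] by auto
  define \<mu> where "\<mu> = qf A n v0"
  define w where "w k = (\<Sum>l<n. A $$ (k, l) * v0 l) - \<mu> * v0 k" for k
  have qmu: "qf A n u - \<mu> * nsq n u \<ge> 0" for u using mn[of u] unfolding \<mu>_def by simp
  have "(\<Sum>k<n. w k * w k) = 0"
  proof (rule quad_zero_lin)
    show "0 \<le> qf A n w - \<mu> * nsq n w" by (rule qmu)
    fix t :: real
    have nexp: "nsq n (\<lambda>k. v0 k + t * w k) = nsq n v0 + 2 * t * (\<Sum>k<n. w k * v0 k) + t\<^sup>2 * nsq n w"
      unfolding nsq_def by (simp add: power2_eq_square algebra_simps sum.distrib sum_distrib_left)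
    have "0 \<le> qf A n (\<lambda>k. v0 k + t * w k) - \<mu> * nsq n (\<lambda>k. v0 k + t * w k)" by (rule qmu)
    also have "\<dots> = (qf A n v0 - \<mu> * nsq n v0) + 2 * t * ((\<Sum>k<n. w k * (\<Sum>l<n. A $$ (k, l) * v0 l)) - \<mu> * (\<Sum>k<n. w k * v0 k))
         + t\<^sup>2 * (qf A n w - \<mu> * nsq n w)"
      using qf_expand[OF sym, where v=v0 and t=t and u=w] nexp by (simp add: algebra_simps)
    also have "(\<Sum>k<n. w k * (\<Sum>l<n. A $$ (k, l) * v0 l)) - \<mu> * (\<Sum>k<n. w k * v0 k) = (\<Sum>k<n. w k * w k)"
    proof -
      have "(\<Sum>k<n. w k * (\<Sum>l<n. A $$ (k, l) * v0 l)) - \<mu> * (\<Sum>k<n. w k * v0 k) =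
          (\<Sum>k<n. w k * ((\<Sum>l<n. A $$ (k, l) * v0 l) - \<mu> * v0 k))"
        by (simp add: right_diff_distrib sum_subtractf sum_distrib_left mult.left_commute)
      also have "\<dots> = (\<Sum>k<n. w k * w k)" by (simp add: w_def)
      finally show ?thesis .
    qed
    also have "qf A n v0 - \<mu> * nsq n v0 = 0" using v0 by (simp add: \<mu>_def)
    finally show "0 \<le> 2 * t * (\<Sum>k<n. w k * w k) + t\<^sup>2 * (qf A n w - \<mu> * nsq n w)" by simp
  qed
  then have w0: "\<forall>k<n. w k = 0"
    by (subst (asm) sum_nonneg_eq_0_iff) auto
  have "eigenvalue A \<mu>"
    unfolding eigenvalue_def eigenvector_def
  proof (intro exI conjI)
    let ?v = "vec n v0"
    show "?v \<in> carrier_vec (dim_row A)" using A by simp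
    show "?v \<noteq> 0\<^sub>v (dim_row A)"
    proof
      assume "?v = 0\<^sub>v (dim_row A)"
      then have "\<forall>k<n. v0 k = 0" using A by (metis carrier_matD(1) index_vec index_zero_vec(1))
      then have "nsq n v0 = 0" by (simp add: nsq_def)
      then show False using v0 by simp
    qed
    show "A *\<^sub>v ?v = \<mu> \<cdot>\<^sub>v ?v"
    proof (rule eq_vecI)
      fix k assume "k < dim_vec (\<mu> \<cdot>\<^sub>v ?v)"
      then have k: "k < n" by simp
      have "(A *\<^sub>v ?v) $ k = (\<Sum>l<n. A $$ (k, l) * v0 l)"
        using A k by (simp add: mult_mat_vec_def scalar_prod_def lessThan_atLeast0 row_def)
      also have "\<dots> = \<mu> * v0 k" using w0 k unfolding w_def by simp
      finally show "(A *\<^sub>v ?v) $ k = (\<mu> \<cdot>\<^sub>v ?v) $ k" using k by simp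
    qed (use A in simp)
  qed
  then have "\<mu> \<ge> c" by (rule ev)
  moreover have "nsq n v \<ge> 0" unfolding nsq_def by (simp add: sum_nonneg)
  ultimately have "c * nsq n v \<le> \<mu> * nsq n v" by (simp add: mult_right_mono)
  also have "\<dots> \<le> qf A n v" using mn[of v] unfolding \<mu>_def .
  finally show ?thesis .
qed

lemma qf_solve:
  assumes A: "A \<in> carrier_mat n n" and c: "c > 0"
    and lb: "\<And>v. qf A n v \<ge> c * nsq n v"
  shows "\<exists>d. \<forall>k<n. (\<Sum>l<n. A $$ (k, l) * d l) = b k"
proof -
  have "Determinant.det A \<noteq> 0"
  proof
    assume "Determinant.det A = 0"
    then obtain v where v: "v \<in> carrier_vec n" "v \<noteq> 0\<^sub>v n" "A *\<^sub>v v = 0\<^sub>v n"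
      using det_0_iff_vec_prod_zero[OF A] by auto
    have Av: "(\<Sum>l<n. A $$ (k, l) * v $ l) = 0" if "k < n" for k
    proof -
      have "(A *\<^sub>v v) $ k = (\<Sum>l<n. A $$ (k, l) * v $ l)"
        using A v(1) that by (simp add: mult_mat_vec_def scalar_prod_def lessThan_atLeast0 row_def)
      moreover have "(A *\<^sub>v v) $ k = 0" using v(3) that by (metis index_zero_vec(1))
      ultimately show ?thesis by simp
    qed
    have "qf A n (\<lambda>k. v $ k) = 0"
      unfolding qf_def using Av by (simp add: mult.assoc sum_distrib_left[symmetric])
    moreover have "nsq n (\<lambda>k. v $ k) > 0"
    proof -
      obtain k where k: "k < n" "v $ k \<noteq> 0"
        using v by (metis carrier_vecD eq_vecI index_zero_vec(1) index_zero_vec(2))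
      have "(v $ k)\<^sup>2 \<le> nsq n (\<lambda>k. v $ k)" unfolding nsq_def using k by (intro member_le_sum) auto
      moreover have "(v $ k)\<^sup>2 > 0" using k by simp
      ultimately show ?thesis by linarith
    qed
    ultimately show False using lb[of "\<lambda>k. v $ k"] c mult_pos_pos[of c "nsq n (\<lambda>k. v $ k)"] by linarith
  qed
  from det_non_zero_imp_unit[OF A this, of undefined]
  obtain B where B: "B \<in> carrier_mat n n" "A * B = 1\<^sub>m n"
    unfolding Units_def ring_mat_def by auto
  define d where "d l = (B *\<^sub>v vec n b) $ l" for l
  have "A *\<^sub>v (B *\<^sub>v vec n b) = vec n b"
    using A B by (simp add: assoc_mult_mat_vec[symmetric, of A n n B n "vec n b"])
  then have "(\<Sum>l<n. A $$ (k, l) * d l) = b k" if "k < n" for k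
  proof -
    have "(A *\<^sub>v (B *\<^sub>v vec n b)) $ k = (\<Sum>l<n. A $$ (k, l) * d l)"
      using A B that unfolding d_def by (simp add: mult_mat_vec_def scalar_prod_def lessThan_atLeast0 row_def)
    then show ?thesis using that \<open>A *\<^sub>v (B *\<^sub>v vec n b) = vec n b\<close> by simp
  qed
  then show ?thesis by blast
qed


lemma quad_cs:
  fixes A B C :: real
  assumes q: "\<And>t. 0 \<le> A + 2 * t * B + t\<^sup>2 * C" and C: "C \<ge> 0"
  shows "B\<^sup>2 \<le> A * C"
proof (cases "C = 0")
  case True
  have "B = 0"
  proof (rule ccontr)
    assume B: "B \<noteq> 0"
    define t where "t = - (A + 1) / (2 * B)"
    have "2 * t * B = - (A + 1)" using B by (simp add: t_def)
    then have "A + 2 * t * B + t\<^sup>2 * C = -1" using True by simp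
    then show False using q[of t] by simp
  qed
  then show ?thesis using True by simp
next
  case False
  with C have Cp: "C > 0" by simp
  define t where "t = - B / C"
  have tC: "t * C = - B" using Cp by (simp add: t_def)
  have "A + 2 * t * B + t\<^sup>2 * C = A + 2 * t * B + t * (t * C)" by (simp add: power2_eq_square)
  also have "\<dots> = A + t * B" using tC by simp
  finally have "0 \<le> A + t * B" using q[of t] by linarith
  then have "0 \<le> (A + t * B) * C" using Cp by simp
  also have "(A + t * B) * C = A * C + B * (t * C)" by (simp add: algebra_simps)
  also have "\<dots> = A * C - B\<^sup>2" using tC by (simp add: power2_eq_square)
  finally show ?thesis by simp
qed

locale main_set = dpp_set M \<phi> m for M :: "'a measure" and \<phi> m +
  fixes r :: nat and f :: "'a \<Rightarrow> real" and \<delta> :: real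
  assumes rpos: "r \<ge> 1" and fmeas: "f \<in> borel_measurable M"
    and fsq: "integrable M (\<lambda>y. (f y)\<^sup>2)" and dl: "0 < \<delta>" "\<delta> < 1"
begin

definition W :: "'a \<Rightarrow> real" where "W y = inverse (wm m \<phi> y)"

definition ip :: "(nat \<Rightarrow> nat \<Rightarrow> 'a) \<Rightarrow> ('a \<Rightarrow> real) \<Rightarrow> ('a \<Rightarrow> real) \<Rightarrow> real" where
  "ip x u v = (1 / real (m * r)) * (\<Sum>j<r. \<Sum>i<m. W (x j i) * u (x j i) * v (x j i))"

lemma wm_nonneg: "wm m \<phi> y \<ge> 0"
  by (simp add: wm_def sum_nonneg)

lemma W_nonneg: "W y \<ge> 0"
  using wm_nonneg by (simp add: W_def)

lemma sum_phi_sq: "(\<Sum>k<m. (\<phi> k y)\<^sup>2) = real m * wm m \<phi> y"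
  using mpos by (simp add: wm_def)

lemma phi_sq_le: "k < m \<Longrightarrow> (\<phi> k y)\<^sup>2 \<le> real m * wm m \<phi> y"
  unfolding sum_phi_sq[symmetric] by (intro member_le_sum) auto

lemma phi_zero: "wm m \<phi> y = 0 \<Longrightarrow> k < m \<Longrightarrow> \<phi> k y = 0"
  using phi_sq_le[of k y] by simp

lemma Ww_le: "W y * wm m \<phi> y \<le> 1"
  by (cases "wm m \<phi> y = 0") (auto simp: W_def)

lemma Ww_phi: "k < m \<Longrightarrow> W y * wm m \<phi> y * \<phi> k y = \<phi> k y"
  by (cases "wm m \<phi> y = 0") (auto simp: W_def phi_zero)

lemma abs_phi_prod: "a < m \<Longrightarrow> c < m \<Longrightarrow> \<bar>\<phi> a y * \<phi> c y\<bar> \<le> 2 * real m * wm m \<phi> y"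
  using abs_mult_le_sq[of "\<phi> a y" "\<phi> c y"] phi_sq_le[of a y] phi_sq_le[of c y] by linarith

lemma ip_sym: "ip x u v = ip x v u"
  unfolding ip_def by (simp add: mult_ac)

lemma ip_nonneg: "ip x u u \<ge> 0"
proof -
  have "0 \<le> W (x j i) * u (x j i) * u (x j i)" for j i
    using W_nonneg[of "x j i"] by (simp add: mult.assoc)
  then show ?thesis by (simp add: ip_def sum_nonneg)
qed

lemma ip_add: "ip x (\<lambda>y. u y + v y) z = ip x u z + ip x v z"
  unfolding ip_def by (simp add: algebra_simps sum.distrib)

lemma ip_diff: "ip x (\<lambda>y. u y - v y) z = ip x u z - ip x v z"
  unfolding ip_def by (simp add: algebra_simps sum_subtractf)

lemma ip_scale: "ip x (\<lambda>y. c * u y) z = c * ip x u z"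
  unfolding ip_def by (simp add: algebra_simps sum_distrib_left)

lemma ip_sum: "ip x (\<lambda>y. \<Sum>k<(n::nat). c k * F k y) z = (\<Sum>k<n. c k * ip x (F k) z)"
proof (induction n)
  case 0 then show ?case by (simp add: ip_def)
next
  case (Suc n)
  have "ip x (\<lambda>y. \<Sum>k<Suc n. c k * F k y) z = ip x (\<lambda>y. (\<Sum>k<n. c k * F k y) + c n * F n y) z"
    by simp
  also have "\<dots> = (\<Sum>k<Suc n. c k * ip x (F k) z)"
    unfolding ip_add ip_scale Suc by simp
  finally show ?case .
qed

lemma ip_expand: "ip x (\<lambda>y. u y + t * v y) (\<lambda>y. u y + t * v y) = ip x u u + 2 * t * ip x u v + t\<^sup>2 * ip x v v"
proof -
  have e: "W y * (u y + t * v y) * (u y + t * v y) = W y * u y * u y + 2 * t * (W y * u y * v y) + t\<^sup>2 * (W y * v y * v y)" for y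
    by (simp add: algebra_simps power2_eq_square)
  show ?thesis unfolding ip_def e by (simp add: sum.distrib sum_distrib_left algebra_simps)
qed

lemma ip_cs: "(ip x u v)\<^sup>2 \<le> ip x u u * ip x v v"
proof (rule quad_cs)
  fix t
  show "0 \<le> ip x u u + 2 * t * ip x u v + t\<^sup>2 * ip x v v"
    using ip_nonneg[of x "\<lambda>y. u y + t * v y"] unfolding ip_expand .
qed (rule ip_nonneg)

definition G :: "(nat \<Rightarrow> nat \<Rightarrow> 'a) \<Rightarrow> real mat" where "G x = gram m r \<phi> (wm m \<phi>) x"

lemma G_carrier: "G x \<in> carrier_mat m m"
  by (simp add: G_def gram_def)

lemma G_entry: "k < m \<Longrightarrow> l < m \<Longrightarrow> G x $$ (k, l) = ip x (\<phi> k) (\<phi> l)"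
  by (simp add: G_def gram_def ip_def W_def)

lemma G_sym: "k < m \<Longrightarrow> l < m \<Longrightarrow> G x $$ (k, l) = G x $$ (l, k)"
  by (simp add: G_entry ip_sym)

lemma ip_lin2: "ip x (\<lambda>y. \<Sum>k<m. c k * \<phi> k y) (\<lambda>y. \<Sum>l<m. e l * \<phi> l y) =
    (\<Sum>k<m. \<Sum>l<m. c k * G x $$ (k, l) * e l)"
proof -
  have inner: "ip x (\<phi> k) (\<lambda>y. \<Sum>l<m. e l * \<phi> l y) = (\<Sum>l<m. G x $$ (k, l) * e l)" if k: "k < m" for k
  proof -
    have "ip x (\<phi> k) (\<lambda>y. \<Sum>l<m. e l * \<phi> l y) = ip x (\<lambda>y. \<Sum>l<m. e l * \<phi> l y) (\<phi> k)"
      by (rule ip_sym)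
    also have "\<dots> = (\<Sum>l<m. e l * ip x (\<phi> l) (\<phi> k))" by (rule ip_sum)
    also have "\<dots> = (\<Sum>l<m. G x $$ (k, l) * e l)"
    proof (rule sum.cong[OF refl])
      fix l assume "l \<in> {..<m}"
      then have "ip x (\<phi> l) (\<phi> k) = G x $$ (k, l)" using k G_entry[of k l x] ip_sym[of x "\<phi> l" "\<phi> k"] by simp
      then show "e l * ip x (\<phi> l) (\<phi> k) = G x $$ (k, l) * e l" by simp
    qed
    finally show ?thesis .
  qed
  have "ip x (\<lambda>y. \<Sum>k<m. c k * \<phi> k y) (\<lambda>y. \<Sum>l<m. e l * \<phi> l y) =
     (\<Sum>k<m. c k * ip x (\<phi> k) (\<lambda>y. \<Sum>l<m. e l * \<phi> l y))" by (rule ip_sum)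
  also have "\<dots> = (\<Sum>k<m. c k * (\<Sum>l<m. G x $$ (k, l) * e l))"
    using inner by simp
  also have "\<dots> = (\<Sum>k<m. \<Sum>l<m. c k * G x $$ (k, l) * e l)"
    by (simp add: sum_distrib_left mult.assoc)
  finally show ?thesis .
qed

lemma qf_G: "qf (G x) m c = ip x (\<lambda>y. \<Sum>k<m. c k * \<phi> k y) (\<lambda>y. \<Sum>k<m. c k * \<phi> k y)"
  unfolding qf_def ip_lin2 ..

lemma eig_finite: "finite {\<mu>. eigenvalue (G x) \<mu>}"
proof -
  have cp: "char_poly (G x) \<noteq> 0"
    using degree_monic_char_poly[OF G_carrier[of x]] by (metis coeff_0 zero_neq_one)
  have "{\<mu>. eigenvalue (G x) \<mu>} = {\<mu>. poly (char_poly (G x)) \<mu> = 0}"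
    using eigenvalue_root_char_poly[OF G_carrier[of x]] by simp
  then show ?thesis using poly_roots_finite[OF cp] by simp
qed

lemma lambda_min_le: "eigenvalue (G x) \<mu> \<Longrightarrow> lambda_min (G x) \<le> \<mu>"
  unfolding lambda_min_def using eig_finite[of x] by (intro Min_le) auto

lemma G_lower:
  assumes "lambda_min (G x) \<ge> 1 - \<delta>"
  shows "qf (G x) m c \<ge> (1 - \<delta>) * nsq m c"
proof (rule qf_lower_bound[OF G_carrier G_sym])
  fix \<mu> assume "eigenvalue (G x) \<mu>"
  then show "1 - \<delta> \<le> \<mu>" using assms lambda_min_le[of x \<mu>] by linarith
qed

end


context main_set begin

definition a :: "nat \<Rightarrow> real" where "a k = (\<integral>y. f y * \<phi> k y \<partial>M)"
definition g :: "'a \<Rightarrow> real" where "g y = f y - (\<Sum>k<m. a k * \<phi> k y)"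

lemma int_fphi: "k < m \<Longrightarrow> integrable M (\<lambda>y. f y * \<phi> k y)"
proof -
  assume k: "k < m"
  have "integrable M (\<lambda>y. ((f y)\<^sup>2 + (\<phi> k y)\<^sup>2))"
    using fsq \<phi>sq[OF k] by simp
  then show ?thesis
  proof (rule Bochner_Integration.integrable_bound)
    show "(\<lambda>y. f y * \<phi> k y) \<in> borel_measurable M" using fmeas \<phi>meas[OF k] by simp
    show "AE y in M. norm (f y * \<phi> k y) \<le> norm ((f y)\<^sup>2 + (\<phi> k y)\<^sup>2)"
      using abs_mult_le_sq by (auto intro!: AE_I2)
  qed
qed

lemma phi_sum_meas: "(\<lambda>y. \<Sum>k<m. c k * \<phi> k y) \<in> borel_measurable M"
  using \<phi>meas by (intro borel_measurable_sum borel_measurable_times borel_measurable_const) auto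

lemma g_meas: "g \<in> borel_measurable M"
  unfolding g_def using fmeas phi_sum_meas by simp

lemma int_phisum_phi: "l < m \<Longrightarrow> integrable M (\<lambda>y. (\<Sum>k<m. c k * \<phi> k y) * \<phi> l y)"
  unfolding sum_distrib_right using int_prod_phi
  by (intro Bochner_Integration.integrable_sum) (auto simp: mult.assoc)

lemma integral_phisum_phi: "l < m \<Longrightarrow> (\<integral>y. (\<Sum>k<m. c k * \<phi> k y) * \<phi> l y \<partial>M) = c l"
proof -
  assume l: "l < m"
  have "(\<integral>y. (\<Sum>k<m. c k * \<phi> k y) * \<phi> l y \<partial>M) = (\<Sum>k<m. c k * (\<integral>y. \<phi> k y * \<phi> l y \<partial>M))"
    unfolding sum_distrib_right mult.assoc
    using int_prod_phi l by (subst Bochner_Integration.integral_sum) auto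
  also have "\<dots> = (\<Sum>k<m. if k = l then c l else 0)"
    using l orth by (intro sum.cong refl) auto
  also have "\<dots> = c l" using l by (simp add: sum.delta')
  finally show ?thesis .
qed

lemma int_gphi: "l < m \<Longrightarrow> integrable M (\<lambda>y. g y * \<phi> l y)"
  unfolding g_def left_diff_distrib using int_fphi int_phisum_phi by simp

lemma integral_gphi: "l < m \<Longrightarrow> (\<integral>y. g y * \<phi> l y \<partial>M) = 0"
proof -
  assume l: "l < m"
  have "(\<integral>y. g y * \<phi> l y \<partial>M) = (\<integral>y. f y * \<phi> l y \<partial>M) - (\<integral>y. (\<Sum>k<m. a k * \<phi> k y) * \<phi> l y \<partial>M)"
    unfolding g_def left_diff_distrib using int_fphi[OF l] int_phisum_phi[OF l] by simp
  also have "\<dots> = 0" using integral_phisum_phi[OF l] by (simp add: a_def)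
  finally show ?thesis .
qed

lemma int_phisum_sq: "integrable M (\<lambda>y. (\<Sum>k<m. c k * \<phi> k y)\<^sup>2)"
proof -
  have "(\<lambda>y. (\<Sum>k<m. c k * \<phi> k y)\<^sup>2) = (\<lambda>y. \<Sum>l<m. c l * ((\<Sum>k<m. c k * \<phi> k y) * \<phi> l y))"
    by (simp add: power2_eq_square sum_distrib_left sum_distrib_right mult_ac)
  then show ?thesis using int_phisum_phi
    by (simp del: power2_eq_square) (intro Bochner_Integration.integrable_sum integrable_mult_right; simp)
qed

lemma integral_phisum_sq: "(\<integral>y. (\<Sum>k<m. c k * \<phi> k y)\<^sup>2 \<partial>M) = nsq m c"
proof -
  have "(\<lambda>y. (\<Sum>k<m. c k * \<phi> k y)\<^sup>2) = (\<lambda>y. \<Sum>l<m. c l * ((\<Sum>k<m. c k * \<phi> k y) * \<phi> l y))"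
    by (simp add: power2_eq_square sum_distrib_left sum_distrib_right mult_ac)
  then have "(\<integral>y. (\<Sum>k<m. c k * \<phi> k y)\<^sup>2 \<partial>M) = (\<Sum>l<m. c l * (\<integral>y. (\<Sum>k<m. c k * \<phi> k y) * \<phi> l y \<partial>M))"
    using int_phisum_phi by (simp del: power2_eq_square)
  also have "\<dots> = nsq m c" unfolding nsq_def using integral_phisum_phi
    by (intro sum.cong refl) (simp add: power2_eq_square)
  finally show ?thesis .
qed

lemma int_g_phisum: "integrable M (\<lambda>y. g y * (\<Sum>k<m. c k * \<phi> k y))"
  unfolding sum_distrib_left using int_gphi
  by (intro Bochner_Integration.integrable_sum) (auto simp: mult.left_commute)

lemma integral_g_phisum: "(\<integral>y. g y * (\<Sum>k<m. c k * \<phi> k y) \<partial>M) = 0"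
proof -
  have "(\<integral>y. g y * (\<Sum>k<m. c k * \<phi> k y) \<partial>M) = (\<Sum>k<m. c k * (\<integral>y. g y * \<phi> k y \<partial>M))"
    unfolding sum_distrib_left using int_gphi
    by (subst Bochner_Integration.integral_sum) (auto simp: mult.left_commute)
  also have "\<dots> = 0" using integral_gphi by simp
  finally show ?thesis .
qed

lemma int_gsq: "integrable M (\<lambda>y. (g y)\<^sup>2)"
proof -
  have e: "(g y)\<^sup>2 = (f y)\<^sup>2 - 2 * (\<Sum>k<m. a k * (f y * \<phi> k y)) + (\<Sum>k<m. a k * \<phi> k y)\<^sup>2" for y
    unfolding g_def by (simp add: power2_eq_square algebra_simps sum_distrib_left)
  show ?thesis unfolding e using fsq int_phisum_sq int_fphi
    by (intro Bochner_Integration.integrable_add Bochner_Integration.integrable_diff integrable_mult_right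
        Bochner_Integration.integrable_sum) auto
qed

lemma L2_expand: "integrable M (\<lambda>y. (g y + (\<Sum>k<m. c k * \<phi> k y))\<^sup>2)"
    "(\<integral>y. (g y + (\<Sum>k<m. c k * \<phi> k y))\<^sup>2 \<partial>M) = (\<integral>y. (g y)\<^sup>2 \<partial>M) + nsq m c"
proof -
  have e: "(g y + (\<Sum>k<m. c k * \<phi> k y))\<^sup>2 = (g y)\<^sup>2 + 2 * (g y * (\<Sum>k<m. c k * \<phi> k y)) + (\<Sum>k<m. c k * \<phi> k y)\<^sup>2" for y
    by (simp add: power2_eq_square algebra_simps)
  show "integrable M (\<lambda>y. (g y + (\<Sum>k<m. c k * \<phi> k y))\<^sup>2)"
    unfolding e using int_gsq int_g_phisum int_phisum_sq by simp
  show "(\<integral>y. (g y + (\<Sum>k<m. c k * \<phi> k y))\<^sup>2 \<partial>M) = (\<integral>y. (g y)\<^sup>2 \<partial>M) + nsq m c"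
    unfolding e using int_gsq int_g_phisum int_phisum_sq integral_g_phisum integral_phisum_sq by simp
qed

lemma f_minus: "f y - (\<Sum>k<m. e k * \<phi> k y) = g y + (\<Sum>k<m. (a k - e k) * \<phi> k y)"
  unfolding g_def by (simp add: left_diff_distrib sum_subtractf)

lemma best_eq: "(INF h \<in> Vspace m \<phi>. \<integral>y. (f y - h y)\<^sup>2 \<partial>M) = (\<integral>y. (g y)\<^sup>2 \<partial>M)"
proof -
  have val: "(\<integral>y. (f y - h y)\<^sup>2 \<partial>M) = (\<integral>y. (g y)\<^sup>2 \<partial>M) + nsq m (\<lambda>k. a k - e k)"
    if "h = (\<lambda>x. \<Sum>k<m. e k * \<phi> k x)" for h e
    unfolding that f_minus L2_expand(2) ..
  have nn: "nsq m c \<ge> 0" for c unfolding nsq_def by (simp add: sum_nonneg)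
  have lb: "(\<integral>y. (g y)\<^sup>2 \<partial>M) \<le> (\<integral>y. (f y - h y)\<^sup>2 \<partial>M)" if "h \<in> Vspace m \<phi>" for h
    using that val nn unfolding Vspace_def by force
  have mem: "(\<lambda>x. \<Sum>k<m. a k * \<phi> k x) \<in> Vspace m \<phi>" unfolding Vspace_def by blast
  have at: "(\<integral>y. (f y - (\<Sum>k<m. a k * \<phi> k y))\<^sup>2 \<partial>M) = (\<integral>y. (g y)\<^sup>2 \<partial>M)"
    using val[OF refl, of a] by (simp add: nsq_def)
  have bdd: "bdd_below ((\<lambda>h. \<integral>y. (f y - h y)\<^sup>2 \<partial>M) ` Vspace m \<phi>)"
    by (rule bdd_belowI2[where m="\<integral>y. (g y)\<^sup>2 \<partial>M"]) (rule lb)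
  show ?thesis
  proof (rule antisym)
    show "(INF h \<in> Vspace m \<phi>. \<integral>y. (f y - h y)\<^sup>2 \<partial>M) \<le> (\<integral>y. (g y)\<^sup>2 \<partial>M)"
      using mem at bdd by (intro cINF_lower2[where x="\<lambda>x. \<Sum>k<m. a k * \<phi> k x"]) auto
    show "(\<integral>y. (g y)\<^sup>2 \<partial>M) \<le> (INF h \<in> Vspace m \<phi>. \<integral>y. (f y - h y)\<^sup>2 \<partial>M)"
      using mem lb by (intro cINF_greatest) auto
  qed
qed


definition bv :: "(nat \<Rightarrow> nat \<Rightarrow> 'a) \<Rightarrow> nat \<Rightarrow> real" where "bv x k = ip x g (\<phi> k)"

lemma emp_norm_ip: "emp_norm m r (wm m \<phi>) x u = sqrt (ip x u u)"
  unfolding emp_norm_def ip_def W_def by (simp add: power2_eq_square mult.assoc)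

lemma nsq_nonneg: "nsq n c \<ge> 0"
  unfolding nsq_def by (simp add: sum_nonneg)

lemma sum_cs: "(\<Sum>k<n. u k * v k)\<^sup>2 \<le> nsq n u * nsq n v"
proof (rule quad_cs)
  fix t :: real
  have "0 \<le> nsq n (\<lambda>k. u k + t * v k)" by (rule nsq_nonneg)
  also have "nsq n (\<lambda>k. u k + t * v k) = nsq n u + 2 * t * (\<Sum>k<n. u k * v k) + t\<^sup>2 * nsq n v"
    unfolding nsq_def by (simp add: power2_eq_square algebra_simps sum.distrib sum_distrib_left)
  finally show "0 \<le> nsq n u + 2 * t * (\<Sum>k<n. u k * v k) + t\<^sup>2 * nsq n v" .
qed (rule nsq_nonneg)

lemma pointwise:
  assumes lm: "lambda_min (G x) \<ge> 1 - \<delta>"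
  shows "(\<integral>y. (f y - wls_proj m r \<phi> (wm m \<phi>) x f y)\<^sup>2 \<partial>M) \<le> (\<integral>y. (g y)\<^sup>2 \<partial>M) + ip x g g / (1 - \<delta>)"
    "(\<integral>y. (f y - wls_proj m r \<phi> (wm m \<phi>) x f y)\<^sup>2 \<partial>M) \<le> (\<integral>y. (g y)\<^sup>2 \<partial>M) + nsq m (bv x) / (1 - \<delta>)\<^sup>2"
proof -
  have lb: "qf (G x) m c \<ge> (1 - \<delta>) * nsq m c" for c using G_lower[OF lm] .
  have dpos: "1 - \<delta> > 0" using dl by simp
  obtain d where d: "\<And>k. k < m \<Longrightarrow> (\<Sum>l<m. G x $$ (k, l) * d l) = bv x k"
    using qf_solve[OF G_carrier dpos lb, of "bv x"] by blast
  define gh where "gh = (\<lambda>y. \<Sum>k<m. (a k + d k) * \<phi> k y)"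
  have res: "f y - gh y = g y + (\<Sum>k<m. (- d k) * \<phi> k y)" for y
    unfolding gh_def g_def by (simp add: distrib_right sum.distrib sum_negf)
  have orthres: "ip x (\<lambda>y. f y - gh y) (\<phi> l) = 0" if l: "l < m" for l
  proof -
    have "ip x (\<lambda>y. f y - gh y) (\<phi> l) = ip x g (\<phi> l) + ip x (\<lambda>y. \<Sum>k<m. (- d k) * \<phi> k y) (\<phi> l)"
      unfolding res ip_add ..
    also have "ip x (\<lambda>y. \<Sum>k<m. (- d k) * \<phi> k y) (\<phi> l) = (\<Sum>k<m. (- d k) * ip x (\<phi> k) (\<phi> l))"
      by (rule ip_sum)
    also have "\<dots> = - (\<Sum>k<m. G x $$ (l, k) * d k)"
    proof -
      have "ip x (\<phi> k) (\<phi> l) = G x $$ (l, k)" if "k < m" for k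
        using G_entry[of l k x] ip_sym[of x "\<phi> k" "\<phi> l"] l that by simp
      then show ?thesis by (simp add: sum_negf[symmetric] mult.commute)
    qed
    also have "\<dots> = - bv x l" using d[OF l] by simp
    finally show ?thesis by (simp add: bv_def)
  qed
  have orthres2: "ip x (\<lambda>y. f y - gh y) (\<lambda>y. \<Sum>k<m. c k * \<phi> k y) = 0" for c
  proof -
    have "ip x (\<lambda>y. f y - gh y) (\<lambda>y. \<Sum>k<m. c k * \<phi> k y) = ip x (\<lambda>y. \<Sum>k<m. c k * \<phi> k y) (\<lambda>y. f y - gh y)"
      by (rule ip_sym)
    also have "\<dots> = (\<Sum>k<m. c k * ip x (\<phi> k) (\<lambda>y. f y - gh y))" by (rule ip_sum)
    also have "\<dots> = 0" using orthres by (simp add: ip_sym[of x "\<phi> _"])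
    finally show ?thesis .
  qed
  have decomp: "ip x (\<lambda>y. f y - (\<Sum>k<m. e k * \<phi> k y)) (\<lambda>y. f y - (\<Sum>k<m. e k * \<phi> k y))
      = ip x (\<lambda>y. f y - gh y) (\<lambda>y. f y - gh y) + qf (G x) m (\<lambda>k. a k + d k - e k)" for e
  proof -
    have eq: "(\<lambda>y. f y - (\<Sum>k<m. e k * \<phi> k y)) = (\<lambda>y. (f y - gh y) + 1 * (\<Sum>k<m. (a k + d k - e k) * \<phi> k y))"
      unfolding gh_def by (auto simp: left_diff_distrib sum_subtractf)
    show ?thesis unfolding eq ip_expand orthres2 qf_G by simp
  qed
  have nsq0: "nsq m c = 0 \<Longrightarrow> k < m \<Longrightarrow> c k = 0" for c k
    unfolding nsq_def by (subst (asm) sum_nonneg_eq_0_iff) auto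
  have the: "wls_proj m r \<phi> (wm m \<phi>) x f = gh"
    unfolding wls_proj_def
  proof (rule the_equality)
    show "gh \<in> Vspace m \<phi> \<and> (\<forall>h\<in>Vspace m \<phi>. emp_norm m r (wm m \<phi>) x (\<lambda>y. f y - gh y) \<le> emp_norm m r (wm m \<phi>) x (\<lambda>y. f y - h y))"
    proof
      show "gh \<in> Vspace m \<phi>" unfolding gh_def Vspace_def by (rule CollectI, rule exI[of _ "\<lambda>k. a k + d k"]) simp
      show "\<forall>h\<in>Vspace m \<phi>. emp_norm m r (wm m \<phi>) x (\<lambda>y. f y - gh y) \<le> emp_norm m r (wm m \<phi>) x (\<lambda>y. f y - h y)"
      proof
        fix h assume "h \<in> Vspace m \<phi>"
        then obtain e where h: "h = (\<lambda>y. \<Sum>k<m. e k * \<phi> k y)" unfolding Vspace_def by blast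
        have "qf (G x) m (\<lambda>k. a k + d k - e k) \<ge> 0"
          using lb[of "\<lambda>k. a k + d k - e k"] mult_nonneg_nonneg[OF less_imp_le[OF dpos] nsq_nonneg[of m "\<lambda>k. a k + d k - e k"]]
          by linarith
        then show "emp_norm m r (wm m \<phi>) x (\<lambda>y. f y - gh y) \<le> emp_norm m r (wm m \<phi>) x (\<lambda>y. f y - h y)"
          unfolding emp_norm_ip h decomp by simp
      qed
    qed
  next
    fix h assume P: "h \<in> Vspace m \<phi> \<and> (\<forall>h'\<in>Vspace m \<phi>. emp_norm m r (wm m \<phi>) x (\<lambda>y. f y - h y) \<le> emp_norm m r (wm m \<phi>) x (\<lambda>y. f y - h' y))"
    then obtain e where h: "h = (\<lambda>y. \<Sum>k<m. e k * \<phi> k y)" unfolding Vspace_def by blast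
    have ghV: "gh \<in> Vspace m \<phi>" unfolding gh_def Vspace_def by (rule CollectI, rule exI[of _ "\<lambda>k. a k + d k"]) simp
    from P ghV have "emp_norm m r (wm m \<phi>) x (\<lambda>y. f y - h y) \<le> emp_norm m r (wm m \<phi>) x (\<lambda>y. f y - gh y)" by blast
    then have "ip x (\<lambda>y. f y - h y) (\<lambda>y. f y - h y) \<le> ip x (\<lambda>y. f y - gh y) (\<lambda>y. f y - gh y)"
      unfolding emp_norm_ip using ip_nonneg by simp
    then have "qf (G x) m (\<lambda>k. a k + d k - e k) \<le> 0" unfolding h decomp by simp
    then have "(1 - \<delta>) * nsq m (\<lambda>k. a k + d k - e k) \<le> 0" using lb[of "\<lambda>k. a k + d k - e k"] by linarith
    then have z: "nsq m (\<lambda>k. a k + d k - e k) = 0"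
      using nsq_nonneg[of m "\<lambda>k. a k + d k - e k"] dpos by (simp add: mult_le_0_iff)
    have "e k = a k + d k" if "k < m" for k using nsq0[OF z that] by simp
    then show "h = gh" unfolding h gh_def by (auto intro!: sum.cong)
  qed
  have err: "(\<integral>y. (f y - wls_proj m r \<phi> (wm m \<phi>) x f y)\<^sup>2 \<partial>M) = (\<integral>y. (g y)\<^sup>2 \<partial>M) + nsq m d"
    unfolding the res L2_expand(2) by (simp add: nsq_def)
  define q where "q = qf (G x) m d"
  have qb: "q = (\<Sum>k<m. d k * bv x k)"
    unfolding q_def qf_def using d by (simp add: mult.assoc sum_distrib_left[symmetric])
  have qip: "q = ip x (\<lambda>y. \<Sum>k<m. d k * \<phi> k y) g"
    unfolding qb ip_sum bv_def using ip_sym by simp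
  have qlb: "q \<ge> (1 - \<delta>) * nsq m d" unfolding q_def by (rule lb)
  have q0: "q \<ge> 0" using qlb mult_nonneg_nonneg[OF less_imp_le[OF dpos] nsq_nonneg[of m d]] by linarith
  have "q\<^sup>2 \<le> q * ip x g g"
    using ip_cs[of x "\<lambda>y. \<Sum>k<m. d k * \<phi> k y" g] unfolding qip[symmetric] qf_G[symmetric] q_def[symmetric]
    by (simp add: mult.commute)
  then have "q \<le> ip x g g"
    using q0 ip_nonneg[of x g] by (cases "q = 0") (auto simp: power2_eq_square)
  then have "(1 - \<delta>) * nsq m d \<le> ip x g g" using qlb by linarith
  then have "nsq m d \<le> ip x g g / (1 - \<delta>)" using dpos by (simp add: le_divide_eq mult.commute)
  then show "(\<integral>y. (f y - wls_proj m r \<phi> (wm m \<phi>) x f y)\<^sup>2 \<partial>M) \<le> (\<integral>y. (g y)\<^sup>2 \<partial>M) + ip x g g / (1 - \<delta>)"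
    unfolding err by simp
  have "q\<^sup>2 \<le> nsq m d * nsq m (bv x)" unfolding qb by (rule sum_cs)
  moreover have "((1 - \<delta>) * nsq m d)\<^sup>2 \<le> q\<^sup>2"
    using qlb dpos nsq_nonneg[of m d] by (intro power_mono) auto
  ultimately have "(1 - \<delta>)\<^sup>2 * nsq m d * nsq m d \<le> nsq m d * nsq m (bv x)"
    by (simp add: power2_eq_square mult_ac)
  then have "(1 - \<delta>)\<^sup>2 * nsq m d \<le> nsq m (bv x)"
    using nsq_nonneg[of m d] nsq_nonneg[of m "bv x"]
    by (cases "nsq m d = 0") (auto simp: mult.commute[of _ "nsq m d"] mult.assoc)
  then have "nsq m d \<le> nsq m (bv x) / (1 - \<delta>)\<^sup>2" using dpos by (simp add: le_divide_eq mult.commute)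
  then show "(\<integral>y. (f y - wls_proj m r \<phi> (wm m \<phi>) x f y)\<^sup>2 \<partial>M) \<le> (\<integral>y. (g y)\<^sup>2 \<partial>M) + nsq m (bv x) / (1 - \<delta>)\<^sup>2"
    unfolding err by simp
qed

end


context main_set begin

lemma wm_meas: "wm m \<phi> \<in> borel_measurable M"
  unfolding wm_def using \<phi>meas
  by (intro borel_measurable_times borel_measurable_const borel_measurable_sum borel_measurable_power) auto

lemma W_meas: "W \<in> borel_measurable M"
  unfolding W_def using wm_meas by measurable

definition h1 :: "'a \<Rightarrow> real" where "h1 y = W y * g y * g y"
definition u :: "nat \<Rightarrow> 'a \<Rightarrow> real" where "u k y = W y * g y * \<phi> k y"

lemma h1_meas: "h1 \<in> borel_measurable M"
  unfolding h1_def using W_meas g_meas by simp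

lemma u_meas: "k < m \<Longrightarrow> u k \<in> borel_measurable M"
  unfolding u_def using W_meas g_meas \<phi>meas by simp

lemma Ww_nonneg: "W y * wm m \<phi> y \<ge> 0"
  using W_nonneg wm_nonneg by simp

lemma h1_int: "p < m \<Longrightarrow> c < m \<Longrightarrow> integrable M (\<lambda>y. h1 y * \<phi> p y * \<phi> c y)"
proof -
  assume ac: "p < m" "c < m"
  have "integrable M (\<lambda>y. 2 * real m * (g y)\<^sup>2)" using int_gsq by simp
  then show ?thesis
  proof (rule Bochner_Integration.integrable_bound)
    show "(\<lambda>y. h1 y * \<phi> p y * \<phi> c y) \<in> borel_measurable M"
      using h1_meas \<phi>meas ac by simp
    show "AE y in M. norm (h1 y * \<phi> p y * \<phi> c y) \<le> norm (2 * real m * (g y)\<^sup>2)"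
    proof (intro AE_I2)
      fix y
      have "\<bar>h1 y * \<phi> p y * \<phi> c y\<bar> = (W y * (g y)\<^sup>2) * \<bar>\<phi> p y * \<phi> c y\<bar>"
        using W_nonneg[of y] by (simp add: h1_def abs_mult power2_eq_square mult_ac)
      also have "\<dots> \<le> (W y * (g y)\<^sup>2) * (2 * real m * wm m \<phi> y)"
        using abs_phi_prod[OF ac, of y] W_nonneg[of y] by (intro mult_left_mono) auto
      also have "\<dots> = 2 * real m * (g y)\<^sup>2 * (W y * wm m \<phi> y)" by (simp add: mult_ac)
      also have "\<dots> \<le> 2 * real m * (g y)\<^sup>2 * 1" using Ww_le[of y] by (intro mult_left_mono) auto
      finally show "norm (h1 y * \<phi> p y * \<phi> c y) \<le> norm (2 * real m * (g y)\<^sup>2)" by simp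
    qed
  qed
qed

lemma u_int: "k < m \<Longrightarrow> p < m \<Longrightarrow> c < m \<Longrightarrow> integrable M (\<lambda>y. u k y * \<phi> p y * \<phi> c y)"
proof -
  assume k: "k < m" and ac: "p < m" "c < m"
  have "integrable M (\<lambda>y. 2 * real m * \<bar>g y * \<phi> k y\<bar>)" using int_gphi[OF k] by simp
  then show ?thesis
  proof (rule Bochner_Integration.integrable_bound)
    show "(\<lambda>y. u k y * \<phi> p y * \<phi> c y) \<in> borel_measurable M"
      using u_meas[OF k] \<phi>meas ac by simp
    show "AE y in M. norm (u k y * \<phi> p y * \<phi> c y) \<le> norm (2 * real m * \<bar>g y * \<phi> k y\<bar>)"
    proof (intro AE_I2)
      fix y
      have "\<bar>u k y * \<phi> p y * \<phi> c y\<bar> = (W y * \<bar>g y * \<phi> k y\<bar>) * \<bar>\<phi> p y * \<phi> c y\<bar>"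
        using W_nonneg[of y] by (simp add: u_def abs_mult mult_ac)
      also have "\<dots> \<le> (W y * \<bar>g y * \<phi> k y\<bar>) * (2 * real m * wm m \<phi> y)"
        using abs_phi_prod[OF ac, of y] W_nonneg[of y] by (intro mult_left_mono) auto
      also have "\<dots> = 2 * real m * \<bar>g y * \<phi> k y\<bar> * (W y * wm m \<phi> y)" by (simp add: mult_ac)
      also have "\<dots> \<le> 2 * real m * \<bar>g y * \<phi> k y\<bar> * 1" using Ww_le[of y] by (intro mult_left_mono) auto
      finally show "norm (u k y * \<phi> p y * \<phi> c y) \<le> norm (2 * real m * \<bar>g y * \<phi> k y\<bar>)" by simp
    qed
  qed
qed

lemma u2_int: "k < m \<Longrightarrow> p < m \<Longrightarrow> c < m \<Longrightarrow> integrable M (\<lambda>y. u k y * u k y * \<phi> p y * \<phi> c y)"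
proof -
  assume k: "k < m" and ac: "p < m" "c < m"
  have "integrable M (\<lambda>y. 2 * (real m)\<^sup>2 * (g y)\<^sup>2)" using int_gsq by simp
  then show ?thesis
  proof (rule Bochner_Integration.integrable_bound)
    show "(\<lambda>y. u k y * u k y * \<phi> p y * \<phi> c y) \<in> borel_measurable M"
      using u_meas[OF k] \<phi>meas ac by simp
    show "AE y in M. norm (u k y * u k y * \<phi> p y * \<phi> c y) \<le> norm (2 * (real m)\<^sup>2 * (g y)\<^sup>2)"
    proof (intro AE_I2)
      fix y
      have W0: "W y \<ge> 0" by (rule W_nonneg)
      have "\<bar>u k y * u k y * \<phi> p y * \<phi> c y\<bar> = ((W y)\<^sup>2 * (g y)\<^sup>2) * (\<phi> k y)\<^sup>2 * \<bar>\<phi> p y * \<phi> c y\<bar>"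
        by (simp add: u_def abs_mult power2_eq_square mult_ac)
      also have "\<dots> \<le> ((W y)\<^sup>2 * (g y)\<^sup>2) * (real m * wm m \<phi> y) * (2 * real m * wm m \<phi> y)"
        using abs_phi_prod[OF ac, of y] phi_sq_le[OF k, of y]
        by (intro mult_mono) (auto intro!: mult_nonneg_nonneg simp: wm_nonneg)
      also have "\<dots> = 2 * (real m)\<^sup>2 * (g y)\<^sup>2 * (W y * wm m \<phi> y)\<^sup>2" by (simp add: power2_eq_square mult_ac)
      also have "\<dots> \<le> 2 * (real m)\<^sup>2 * (g y)\<^sup>2 * 1"
        using Ww_le[of y] Ww_nonneg[of y] by (intro mult_left_mono) (auto simp: power_le_one)
      finally show "norm (u k y * u k y * \<phi> p y * \<phi> c y) \<le> norm (2 * (real m)\<^sup>2 * (g y)\<^sup>2)" by simp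
    qed
  qed
qed


lemma sum_phi_sq': "(\<Sum>p<m. \<phi> p y * \<phi> p y) = real m * wm m \<phi> y"
  using sum_phi_sq[of y] by (simp add: power2_eq_square)

lemma sum_u_phi: "k < m \<Longrightarrow> (\<Sum>p<m. u k y * \<phi> p y * \<phi> p y) = real m * (g y * \<phi> k y)"
proof -
  assume k: "k < m"
  have "(\<Sum>p<m. u k y * \<phi> p y * \<phi> p y) = u k y * (\<Sum>p<m. \<phi> p y * \<phi> p y)"
    by (simp add: sum_distrib_left mult.assoc)
  also have "\<dots> = real m * (g y * (W y * wm m \<phi> y * \<phi> k y))"
    unfolding sum_phi_sq' u_def by (simp add: mult_ac)
  also have "\<dots> = real m * (g y * \<phi> k y)" using Ww_phi[OF k] by simp
  finally show ?thesis .
qed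

lemma EH: "integrable (gammaDPP M m \<phi>) (\<lambda>z. \<Sum>i<m. h1 (z i))"
    "(\<integral>z. (\<Sum>i<m. h1 (z i)) \<partial>gammaDPP M m \<phi>) \<le> real m * (\<integral>y. (g y)\<^sup>2 \<partial>M)"
proof -
  show "integrable (gammaDPP M m \<phi>) (\<lambda>z. \<Sum>i<m. h1 (z i))" using E1(1)[OF h1_meas h1_int] .
  have "(\<integral>z. (\<Sum>i<m. h1 (z i)) \<partial>gammaDPP M m \<phi>) = (\<Sum>p<m. \<integral>y. h1 y * \<phi> p y * \<phi> p y \<partial>M)"
    using E1(2)[OF h1_meas h1_int] .
  also have "\<dots> = (\<integral>y. (\<Sum>p<m. h1 y * \<phi> p y * \<phi> p y) \<partial>M)"
    using h1_int by (subst Bochner_Integration.integral_sum) auto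
  also have "\<dots> \<le> (\<integral>y. real m * (g y)\<^sup>2 \<partial>M)"
  proof (rule integral_mono)
    show "integrable M (\<lambda>y. \<Sum>p<m. h1 y * \<phi> p y * \<phi> p y)"
      using h1_int by (intro Bochner_Integration.integrable_sum) auto
    show "integrable M (\<lambda>y. real m * (g y)\<^sup>2)" using int_gsq by simp
    fix y
    have "(\<Sum>p<m. h1 y * \<phi> p y * \<phi> p y) = real m * (g y)\<^sup>2 * (W y * wm m \<phi> y)"
      unfolding mult.assoc sum_distrib_left[symmetric] sum_phi_sq' h1_def by (simp add: power2_eq_square mult_ac)
    also have "\<dots> \<le> real m * (g y)\<^sup>2 * 1" using Ww_le[of y] by (intro mult_left_mono) auto
    finally show "(\<Sum>p<m. h1 y * \<phi> p y * \<phi> p y) \<le> real m * (g y)\<^sup>2" by simp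
  qed
  also have "\<dots> = real m * (\<integral>y. (g y)\<^sup>2 \<partial>M)" by simp
  finally show "(\<integral>z. (\<Sum>i<m. h1 (z i)) \<partial>gammaDPP M m \<phi>) \<le> real m * (\<integral>y. (g y)\<^sup>2 \<partial>M)" .
qed

definition Y :: "nat \<Rightarrow> (nat \<Rightarrow> 'a) \<Rightarrow> real" where "Y k z = (1 / real m) * (\<Sum>i<m. u k (z i))"

lemma sumU0: "k < m \<Longrightarrow> (\<Sum>p<m. \<integral>y. u k y * \<phi> p y * \<phi> p y \<partial>M) = 0"
proof -
  assume k: "k < m"
  have "(\<Sum>p<m. \<integral>y. u k y * \<phi> p y * \<phi> p y \<partial>M) = (\<integral>y. (\<Sum>p<m. u k y * \<phi> p y * \<phi> p y) \<partial>M)"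
    using u_int[OF k] by (subst Bochner_Integration.integral_sum) auto
  also have "\<dots> = (\<integral>y. real m * (g y * \<phi> k y) \<partial>M)" using sum_u_phi[OF k] by simp
  also have "\<dots> = 0" using integral_gphi[OF k] by simp
  finally show ?thesis .
qed

lemma EY: assumes k: "k < m"
  shows "integrable (gammaDPP M m \<phi>) (Y k)" "(\<integral>z. Y k z \<partial>gammaDPP M m \<phi>) = 0"
    "integrable (gammaDPP M m \<phi>) (\<lambda>z. (Y k z)\<^sup>2)"
    "(\<integral>z. (Y k z)\<^sup>2 \<partial>gammaDPP M m \<phi>) \<le> (1 / (real m)\<^sup>2) * (\<Sum>p<m. \<integral>y. u k y * u k y * \<phi> p y * \<phi> p y \<partial>M)"
proof -
  note e1 = E1[OF u_meas[OF k] u_int[OF k]]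
  note e2 = E2[OF u_meas[OF k] u_int[OF k] u2_int[OF k]]
  show "integrable (gammaDPP M m \<phi>) (Y k)" unfolding Y_def using e1(1) by simp
  show "(\<integral>z. Y k z \<partial>gammaDPP M m \<phi>) = 0" unfolding Y_def using e1(2) sumU0[OF k] by simp
  have sq: "(Y k z)\<^sup>2 = (1 / (real m)\<^sup>2) * (\<Sum>i<m. u k (z i))\<^sup>2" for z
    unfolding Y_def by (simp add: power_mult_distrib power_divide)
  show "integrable (gammaDPP M m \<phi>) (\<lambda>z. (Y k z)\<^sup>2)" unfolding sq using e2(1) by simp
  define U where "U p c = (\<integral>y. u k y * \<phi> p y * \<phi> c y \<partial>M)" for p c
  have Usym: "U c p = U p c" for p c unfolding U_def by (simp add: mult_ac)
  have nn: "(\<Sum>p<m. \<Sum>c<m. U p c * U c p) \<ge> 0"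
    by (intro sum_nonneg) (simp add: Usym)
  have "(\<integral>z. (Y k z)\<^sup>2 \<partial>gammaDPP M m \<phi>) = (1 / (real m)\<^sup>2) * (\<integral>z. (\<Sum>i<m. u k (z i))\<^sup>2 \<partial>gammaDPP M m \<phi>)"
    unfolding sq by simp
  also have "(\<integral>z. (\<Sum>i<m. u k (z i))\<^sup>2 \<partial>gammaDPP M m \<phi>) =
      (\<Sum>p<m. \<integral>y. u k y * u k y * \<phi> p y * \<phi> p y \<partial>M) + ((\<Sum>p<m. U p p)\<^sup>2 - (\<Sum>p<m. \<Sum>c<m. U p c * U c p))"
    using e2(2) unfolding U_def .
  also have "(\<Sum>p<m. U p p) = 0" unfolding U_def using sumU0[OF k] .
  finally have eq: "(\<integral>z. (Y k z)\<^sup>2 \<partial>gammaDPP M m \<phi>) = (1 / (real m)\<^sup>2) *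
     ((\<Sum>p<m. \<integral>y. u k y * u k y * \<phi> p y * \<phi> p y \<partial>M) - (\<Sum>p<m. \<Sum>c<m. U p c * U c p))"
    by simp
  have "(1 / (real m)\<^sup>2) * ((\<Sum>p<m. \<integral>y. u k y * u k y * \<phi> p y * \<phi> p y \<partial>M) - (\<Sum>p<m. \<Sum>c<m. U p c * U c p))
     \<le> (1 / (real m)\<^sup>2) * (\<Sum>p<m. \<integral>y. u k y * u k y * \<phi> p y * \<phi> p y \<partial>M)"
    using nn by (intro mult_left_mono) auto
  then show "(\<integral>z. (Y k z)\<^sup>2 \<partial>gammaDPP M m \<phi>) \<le> (1 / (real m)\<^sup>2) * (\<Sum>p<m. \<integral>y. u k y * u k y * \<phi> p y * \<phi> p y \<partial>M)"
    unfolding eq .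
qed

lemma sum_EY2: "(\<Sum>k<m. \<integral>z. (Y k z)\<^sup>2 \<partial>gammaDPP M m \<phi>) \<le> (\<integral>y. (g y)\<^sup>2 \<partial>M)"
proof -
  have "(\<Sum>k<m. \<integral>z. (Y k z)\<^sup>2 \<partial>gammaDPP M m \<phi>) \<le>
      (\<Sum>k<m. (1 / (real m)\<^sup>2) * (\<Sum>p<m. \<integral>y. u k y * u k y * \<phi> p y * \<phi> p y \<partial>M))"
    using EY(4) by (intro sum_mono) auto
  also have "\<dots> = (1 / (real m)\<^sup>2) * (\<integral>y. (\<Sum>k<m. \<Sum>p<m. u k y * u k y * \<phi> p y * \<phi> p y) \<partial>M)"
  proof -
    have "(\<integral>y. (\<Sum>k<m. \<Sum>p<m. u k y * u k y * \<phi> p y * \<phi> p y) \<partial>M) =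
        (\<Sum>k<m. \<integral>y. (\<Sum>p<m. u k y * u k y * \<phi> p y * \<phi> p y) \<partial>M)"
      using u2_int by (intro Bochner_Integration.integral_sum Bochner_Integration.integrable_sum) auto
    also have "\<dots> = (\<Sum>k<m. \<Sum>p<m. \<integral>y. u k y * u k y * \<phi> p y * \<phi> p y \<partial>M)"
      using u2_int by (intro sum.cong refl Bochner_Integration.integral_sum) auto
    finally show ?thesis by (simp add: sum_distrib_left)
  qed
  also have "(\<integral>y. (\<Sum>k<m. \<Sum>p<m. u k y * u k y * \<phi> p y * \<phi> p y) \<partial>M) \<le> (\<integral>y. (real m)\<^sup>2 * (g y)\<^sup>2 \<partial>M)"
  proof (rule integral_mono)
    show "integrable M (\<lambda>y. \<Sum>k<m. \<Sum>p<m. u k y * u k y * \<phi> p y * \<phi> p y)"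
      using u2_int by (intro Bochner_Integration.integrable_sum) auto
    show "integrable M (\<lambda>y. (real m)\<^sup>2 * (g y)\<^sup>2)" using int_gsq by simp
    fix y
    have "(\<Sum>k<m. \<Sum>p<m. u k y * u k y * \<phi> p y * \<phi> p y) =
        (W y * g y)\<^sup>2 * (\<Sum>k<m. \<phi> k y * \<phi> k y) * (\<Sum>p<m. \<phi> p y * \<phi> p y)"
      unfolding u_def by (simp add: sum_distrib_left sum_distrib_right power2_eq_square mult_ac)
    also have "\<dots> = (real m)\<^sup>2 * (g y)\<^sup>2 * (W y * wm m \<phi> y)\<^sup>2"
      unfolding sum_phi_sq' by (simp add: power2_eq_square mult_ac)
    also have "\<dots> \<le> (real m)\<^sup>2 * (g y)\<^sup>2 * 1"
      using Ww_le[of y] Ww_nonneg[of y] by (intro mult_left_mono) (auto simp: power_le_one)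
    finally show "(\<Sum>k<m. \<Sum>p<m. u k y * u k y * \<phi> p y * \<phi> p y) \<le> (real m)\<^sup>2 * (g y)\<^sup>2" by simp
  qed
  then have "(1 / (real m)\<^sup>2) * (\<integral>y. (\<Sum>k<m. \<Sum>p<m. u k y * u k y * \<phi> p y * \<phi> p y) \<partial>M) \<le>
      (1 / (real m)\<^sup>2) * (\<integral>y. (real m)\<^sup>2 * (g y)\<^sup>2 \<partial>M)"
    by (intro mult_left_mono) auto
  also have "\<dots> = (\<integral>y. (g y)\<^sup>2 \<partial>M)" using mpos by simp
  finally show ?thesis .
qed

end


lemma ennreal_bound:
  fixes e B :: "'b \<Rightarrow> real"
  assumes N: "prob_space N" and S: "S \<in> sets N" and P: "measure N S > 0"
    and Bi: "integrable N B" and Bn: "\<And>x. B x \<ge> 0"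
    and eb: "\<And>x. x \<in> S \<Longrightarrow> e x \<le> c0 + B x" and c0: "c0 \<ge> 0"
    and K: "(\<integral>x. B x \<partial>N) \<le> K"
  shows "(\<integral>\<^sup>+ x. indicator S x * ennreal (e x) \<partial>N) / ennreal (measure N S) \<le> ennreal (c0 + K / measure N S)"
proof -
  interpret prob_space N by (rule N)
  have Si: "integrable N (indicator S :: 'b \<Rightarrow> real)"
    using S emeasure_finite[of S] by (intro integrable_real_indicator) (auto simp: less_top[symmetric])
  have sumi: "integrable N (\<lambda>x. c0 * indicator S x + B x)"
    using Si Bi by (intro Bochner_Integration.integrable_add integrable_mult_right) auto
  have "(\<integral>\<^sup>+ x. indicator S x * ennreal (e x) \<partial>N) \<le> (\<integral>\<^sup>+ x. ennreal (c0 * indicator S x + B x) \<partial>N)"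
  proof (rule nn_integral_mono)
    fix x
    show "indicator S x * ennreal (e x) \<le> ennreal (c0 * indicator S x + B x)"
      using eb[of x] Bn[of x] by (cases "x \<in> S") (auto intro: ennreal_leI)
  qed
  also have "\<dots> = ennreal (\<integral>x. c0 * indicator S x + B x \<partial>N)"
    using sumi c0 Bn by (intro nn_integral_eq_integral) (auto intro!: add_nonneg_nonneg)
  also have "(\<integral>x. c0 * indicator S x + B x \<partial>N) = c0 * measure N S + (\<integral>x. B x \<partial>N)"
    using Si Bi S sets.sets_into_space[OF S] by (simp add: Int_absorb2)
  finally have num: "(\<integral>\<^sup>+ x. indicator S x * ennreal (e x) \<partial>N) \<le> ennreal (c0 * measure N S + (\<integral>x. B x \<partial>N))" .
  have "(\<integral>\<^sup>+ x. indicator S x * ennreal (e x) \<partial>N) / ennreal (measure N S) \<le>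
      ennreal (c0 * measure N S + (\<integral>x. B x \<partial>N)) / ennreal (measure N S)"
    by (rule divide_right_mono_ennreal[OF num])
  also have "\<dots> = ennreal ((c0 * measure N S + (\<integral>x. B x \<partial>N)) / measure N S)"
    using P c0 Bn by (intro divide_ennreal) (auto intro!: add_nonneg_nonneg integral_nonneg)
  also have "\<dots> \<le> ennreal (c0 + K / measure N S)"
  proof (rule ennreal_leI)
    have "(c0 * measure N S + (\<integral>x. B x \<partial>N)) / measure N S = c0 + (\<integral>x. B x \<partial>N) / measure N S"
      using P by (simp add: field_simps)
    also have "\<dots> \<le> c0 + K / measure N S" using K P by (simp add: divide_right_mono)
    finally show "(c0 * measure N S + (\<integral>x. B x \<partial>N)) / measure N S \<le> c0 + K / measure N S" .
  qed
  finally show ?thesis .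
qed

context main_set begin

abbreviation Gam where "Gam \<equiv> PiM {..<r} (\<lambda>_. gammaDPP M m \<phi>)"

lemma ip_gg_eq: "ip x g g = (1 / real (m * r)) * (\<Sum>j<r. \<Sum>i<m. h1 (x j i))"
  unfolding ip_def h1_def ..

lemma E_ipgg: "integrable Gam (\<lambda>x. ip x g g)" "(\<integral>x. ip x g g \<partial>Gam) \<le> (\<integral>y. (g y)\<^sup>2 \<partial>M)"
proof -
  note P = prod_one[OF gamma_prob _ EH(1)]
  have "integrable Gam (\<lambda>x. \<Sum>j<r. \<Sum>i<m. h1 (x j i))"
    by (rule Bochner_Integration.integrable_sum) (use P(1) in auto)
  then show "integrable Gam (\<lambda>x. ip x g g)" unfolding ip_gg_eq by (rule integrable_mult_right)
  have isum: "(\<integral>x. (\<Sum>j<r. \<Sum>i<m. h1 (x j i)) \<partial>Gam) = (\<Sum>j<r. \<integral>x. (\<Sum>i<m. h1 (x j i)) \<partial>Gam)"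
    by (rule Bochner_Integration.integral_sum) (use P(1) in auto)
  have "(\<integral>x. ip x g g \<partial>Gam) = (1 / real (m * r)) * (\<Sum>j<r. \<integral>x. (\<Sum>i<m. h1 (x j i)) \<partial>Gam)"
    unfolding ip_gg_eq isum[symmetric] by simp
  also have "\<dots> = (1 / real (m * r)) * (real r * (\<integral>z. (\<Sum>i<m. h1 (z i)) \<partial>gammaDPP M m \<phi>))"
    using P(2) by simp
  also have "\<dots> \<le> (1 / real (m * r)) * (real r * (real m * (\<integral>y. (g y)\<^sup>2 \<partial>M)))"
    using EH(2) by (intro mult_left_mono) auto
  also have "\<dots> = (\<integral>y. (g y)\<^sup>2 \<partial>M)" using mpos rpos by simp
  finally show "(\<integral>x. ip x g g \<partial>Gam) \<le> (\<integral>y. (g y)\<^sup>2 \<partial>M)" .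
qed

lemma bv_eq: "bv x k = (1 / real r) * (\<Sum>j<r. Y k (x j))"
  unfolding bv_def ip_def Y_def u_def by (simp add: sum_distrib_left mult_ac)

lemma E_nsq: "integrable Gam (\<lambda>x. nsq m (bv x))" "(\<integral>x. nsq m (bv x) \<partial>Gam) \<le> (\<integral>y. (g y)\<^sup>2 \<partial>M) / real r"
proof -
  have eq: "nsq m (bv x) = (\<Sum>k<m. (1 / (real r)\<^sup>2) * (\<Sum>j<r. Y k (x j))\<^sup>2)" for x
    unfolding nsq_def bv_eq by (simp add: power_mult_distrib power_divide)
  note P = prod_sq[OF gamma_prob EY(1) EY(3) EY(2), of _ r]
  show "integrable Gam (\<lambda>x. nsq m (bv x))" unfolding eq
    using P(1) by (intro Bochner_Integration.integrable_sum integrable_mult_right) auto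
  have "(\<integral>x. nsq m (bv x) \<partial>Gam) = (\<Sum>k<m. (1 / (real r)\<^sup>2) * (\<integral>x. (\<Sum>j<r. Y k (x j))\<^sup>2 \<partial>Gam))"
    unfolding eq using P(1) by (subst Bochner_Integration.integral_sum) auto
  also have "\<dots> = (\<Sum>k<m. (1 / (real r)\<^sup>2) * (real r * (\<integral>z. (Y k z)\<^sup>2 \<partial>gammaDPP M m \<phi>)))"
    using P(2) by simp
  also have "\<dots> = (1 / real r) * (\<Sum>k<m. \<integral>z. (Y k z)\<^sup>2 \<partial>gammaDPP M m \<phi>)"
    using rpos by (simp add: sum_distrib_left power2_eq_square)
  also have "\<dots> \<le> (1 / real r) * (\<integral>y. (g y)\<^sup>2 \<partial>M)"
    using sum_EY2 by (intro mult_left_mono) auto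
  finally show "(\<integral>x. nsq m (bv x) \<partial>Gam) \<le> (\<integral>y. (g y)\<^sup>2 \<partial>M) / real r" by simp
qed

lemma final:
  defines "S \<equiv> {x \<in> space Gam. lambda_min (gram m r \<phi> (wm m \<phi>) x) \<ge> 1 - \<delta>}"
  assumes PS: "measure Gam S > 0"
  defines "err \<equiv> (\<lambda>x. \<integral>y. (f y - wls_proj m r \<phi> (wm m \<phi>) x f y)\<^sup>2 \<partial>M)"
    and "best \<equiv> (INF h \<in> Vspace m \<phi>. \<integral>y. (f y - h y)\<^sup>2 \<partial>M)"
  shows "(\<integral>\<^sup>+ x. indicator S x * ennreal (err x) \<partial>Gam) / ennreal (measure Gam S)
           \<le> ennreal ((1 + inverse (measure Gam S) * inverse (1 - \<delta>)) * best)"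
    "(\<integral>\<^sup>+ x. indicator S x * ennreal (err x) \<partial>Gam) / ennreal (measure Gam S)
           \<le> ennreal ((1 + inverse (measure Gam S) * inverse ((1 - \<delta>)\<^sup>2) * inverse (real r)) * best)"
proof -
  have Gp: "prob_space Gam" by (intro prob_space_PiM gamma_prob)
  have Sm: "S \<in> sets Gam" using PS measure_notin_sets by fastforce
  have best: "best = (\<integral>y. (g y)\<^sup>2 \<partial>M)" unfolding best_def by (rule best_eq)
  have c0: "(\<integral>y. (g y)\<^sup>2 \<partial>M) \<ge> 0" by simp
  have dpos: "1 - \<delta> > 0" using dl by simp
  have inS: "lambda_min (G x) \<ge> 1 - \<delta>" if "x \<in> S" for x using that by (simp add: S_def G_def)
  let ?P = "measure Gam S"
  have "(\<integral>\<^sup>+ x. indicator S x * ennreal (err x) \<partial>Gam) / ennreal ?P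
       \<le> ennreal ((\<integral>y. (g y)\<^sup>2 \<partial>M) + ((\<integral>y. (g y)\<^sup>2 \<partial>M) / (1 - \<delta>)) / ?P)"
  proof (rule ennreal_bound[OF Gp Sm PS])
    show "integrable Gam (\<lambda>x. ip x g g / (1 - \<delta>))" using E_ipgg(1) by simp
    show "0 \<le> ip x g g / (1 - \<delta>)" for x using ip_nonneg dpos by simp
    show "err x \<le> (\<integral>y. (g y)\<^sup>2 \<partial>M) + ip x g g / (1 - \<delta>)" if "x \<in> S" for x
      unfolding err_def by (rule pointwise(1)[OF inS[OF that]])
    show "0 \<le> (\<integral>y. (g y)\<^sup>2 \<partial>M)" by (rule c0)
    show "(\<integral>x. ip x g g / (1 - \<delta>) \<partial>Gam) \<le> (\<integral>y. (g y)\<^sup>2 \<partial>M) / (1 - \<delta>)"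
      using E_ipgg(2) dpos by (simp add: divide_right_mono)
  qed
  also have "(\<integral>y. (g y)\<^sup>2 \<partial>M) + ((\<integral>y. (g y)\<^sup>2 \<partial>M) / (1 - \<delta>)) / ?P
      = (1 + inverse ?P * inverse (1 - \<delta>)) * best"
    unfolding best by (simp add: field_simps)
  finally show "(\<integral>\<^sup>+ x. indicator S x * ennreal (err x) \<partial>Gam) / ennreal ?P
           \<le> ennreal ((1 + inverse ?P * inverse (1 - \<delta>)) * best)" .
  have "(\<integral>\<^sup>+ x. indicator S x * ennreal (err x) \<partial>Gam) / ennreal ?P
       \<le> ennreal ((\<integral>y. (g y)\<^sup>2 \<partial>M) + ((\<integral>y. (g y)\<^sup>2 \<partial>M) / real r / (1 - \<delta>)\<^sup>2) / ?P)"
  proof (rule ennreal_bound[OF Gp Sm PS])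
    show "integrable Gam (\<lambda>x. nsq m (bv x) / (1 - \<delta>)\<^sup>2)" using E_nsq(1) by simp
    show "0 \<le> nsq m (bv x) / (1 - \<delta>)\<^sup>2" for x using nsq_nonneg by simp
    show "err x \<le> (\<integral>y. (g y)\<^sup>2 \<partial>M) + nsq m (bv x) / (1 - \<delta>)\<^sup>2" if "x \<in> S" for x
      unfolding err_def by (rule pointwise(2)[OF inS[OF that]])
    show "0 \<le> (\<integral>y. (g y)\<^sup>2 \<partial>M)" by (rule c0)
    show "(\<integral>x. nsq m (bv x) / (1 - \<delta>)\<^sup>2 \<partial>Gam) \<le> (\<integral>y. (g y)\<^sup>2 \<partial>M) / real r / (1 - \<delta>)\<^sup>2"
      using divide_right_mono[OF E_nsq(2), of "(1 - \<delta>)\<^sup>2"] by simp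
  qed
  also have "(\<integral>y. (g y)\<^sup>2 \<partial>M) + ((\<integral>y. (g y)\<^sup>2 \<partial>M) / real r / (1 - \<delta>)\<^sup>2) / ?P
      = (1 + inverse ?P * inverse ((1 - \<delta>)\<^sup>2) * inverse (real r)) * best"
    unfolding best by (simp add: field_simps)
  finally show "(\<integral>\<^sup>+ x. indicator S x * ennreal (err x) \<partial>Gam) / ennreal ?P
           \<le> ennreal ((1 + inverse ?P * inverse ((1 - \<delta>)\<^sup>2) * inverse (real r)) * best)" .
qed

end


theorem mainTheorem15:
  fixes M :: "'a :: polish_space measure"
    and \<phi> :: "nat \<Rightarrow> 'a \<Rightarrow> real"
    and m r :: nat and \<delta> :: real and f :: "'a \<Rightarrow> real"
  assumes M_borel: "sets M = sets borel" and M_prob: "prob_space M"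
    and m_pos: "m \<ge> 1" and r_pos: "r \<ge> 1"
    and \<phi>_L2: "\<And>k. k < m \<Longrightarrow> \<phi> k \<in> borel_measurable M \<and> integrable M (\<lambda>x. (\<phi> k x)\<^sup>2)"
    and \<phi>_orth: "\<And>k l. k < m \<Longrightarrow> l < m \<Longrightarrow>
                  (\<integral>x. \<phi> k x * \<phi> l x \<partial>M) = (if k = l then 1 else 0)"
    and \<delta>_bounds: "0 < \<delta>" "\<delta> < 1"
    and S_pos: "measure (PiM {..<r} (\<lambda>_. gammaDPP M m \<phi>))
                  {x \<in> space (PiM {..<r} (\<lambda>_. gammaDPP M m \<phi>)).
                     lambda_min (gram m r \<phi> (wm m \<phi>) x) \<ge> 1 - \<delta>} > 0"
    and f_L2: "f \<in> borel_measurable M" "integrable M (\<lambda>x. (f x)\<^sup>2)"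
  shows
   "let \<Gamma> = PiM {..<r} (\<lambda>_. gammaDPP M m \<phi>);
        S = {x \<in> space \<Gamma>. lambda_min (gram m r \<phi> (wm m \<phi>) x) \<ge> 1 - \<delta>};
        PS = measure \<Gamma> S;
        err = (\<lambda>x. \<integral>y. (f y - wls_proj m r \<phi> (wm m \<phi>) x f y)\<^sup>2 \<partial>M);
        condE = (\<integral>\<^sup>+ x. indicator S x * ennreal (err x) \<partial>\<Gamma>) / ennreal PS;
        best = (INF g \<in> Vspace m \<phi>. \<integral>y. (f y - g y)\<^sup>2 \<partial>M)
    in condE \<le> ennreal ((1 + inverse PS * inverse (1 - \<delta>)) * best)
     \<and> condE \<le> ennreal ((1 + inverse PS * inverse ((1 - \<delta>)\<^sup>2) * inverse (real r)) * best)"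
proof -
  have D: "dpp_set M \<phi> m"
  proof (rule dpp_set.intro)
    show "prob_space M" by (rule M_prob)
    show "1 \<le> m" by (rule m_pos)
    show "\<phi> k \<in> borel_measurable M" if "k < m" for k using \<phi>_L2[OF that] by simp
    show "integrable M (\<lambda>x. (\<phi> k x)\<^sup>2)" if "k < m" for k using \<phi>_L2[OF that] by simp
    show "(\<integral>x. \<phi> k x * \<phi> l x \<partial>M) = (if k = l then 1 else 0)" if "k < m" "l < m" for k l
      using \<phi>_orth[OF that] .
  qed
  have A: "main_set_axioms M r f \<delta>"
    by (rule main_set_axioms.intro[OF r_pos f_L2(1) f_L2(2) \<delta>_bounds(1) \<delta>_bounds(2)])
  interpret main_set M \<phi> m r f \<delta> by (rule main_set.intro[OF D A])
  show ?thesis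
    unfolding Let_def using final[OF S_pos] by simp
qed

end
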